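(* Let $K\subset S^3$ be an oriented knot, with meridian $m$ and (Seifert-framed) longitude $l$ in $\pi_1(S^3\setminus K)$. Suppose that for some $m_0\ge 2$ there is a group homomorphism $\rho:\pi_1(S^3\setminus K)\to GL_{m_0}(\mathbb{C})$ such that \[ \rho(m)=\mathrm{diag}(\mu_0,1,1,\dots,1),\qquad \rho(l)=\mathrm{diag}(\lambda_0,\ast,\ast,\dots,\ast), \] where the asterisks denote arbitrary complex numbers. Then the knot DGA $(\mathcal{A},\partial)$ of $K$ (computed from any braid $B$ whose closure is $K$) has an augmentation $\epsilon$ to $\mathbb{C}$ with $(\epsilon(\lambda),\epsilon(\mu),\epsilon(U))=(\lambda_0,\mu_0,1)$.
   Context: Braid group $B_n$ has generators $\sigma_1,\dots,\sigma_{n-1}$. Let $\mathcal{A}_n$ be the free noncommutative unital algebra over $\mathbb{Z}$ on generators $a_{ij}$, $1\le i,j\le n$, $i\neq j$. The braid homomorphism $\phi:B_n\to\mathrm{Aut}(\mathcal{A}_n)$ is defined on generators by: $\phi_{\sigma_k}(a_{ij})=a_{ij}$ for $i,j\ne k,k+1$; $a_{k+1,i}\mapsto a_{ki}$ and $a_{i,k+1}\mapsto a_{ik}$ for $i\ne k,k+1$; $a_{k,k+1}\mapsto -a_{k+1,k}$; $a_{k+1,k}\mapsto -a_{k,k+1}$; $a_{ki}\mapsto a_{k+1,i}-a_{k+1,k}a_{ki}$ and $a_{ik}\mapsto a_{i,k+1}-a_{ik}a_{k,k+1}$ for $i\ne k,k+1$ (this extends to a homomorphism on $B_n$). For $B\in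 B_n$, view $B\in B_{n+1}$ by adding an extra noninteracting strand labeled $*$ (index $n+1$), and define $n\times n$ matrices $\Phi^L_B,\Phi^R_B$ over $\mathcal{A}_n$ by $\phi_B(a_{i*})=\sum_{j=1}^n(\Phi^L_B)_{ij}a_{j*}$ and $\phi_B(a_{*i})=\sum_{j=1}^n a_{*j}(\Phi^R_B)_{ji}$ for $1\le i\le n$. The knot DGA of $K$ (closure of $B\in B_n$) is the free noncommutative unital algebra $\mathcal{A}$ over $R=\mathbb{Z}[\lambda^{\pm1},\mu^{\pm1},U^{\pm1}]$ (coefficients central, degree $0$) on generators $a_{ij}$ ($i\ne j$, degree $0$), $b_{ij}$ ($i\ne j$, degree $1$), $c_{ij},d_{ij}$ ($1\le i,j\le n$, degree $1$), $e_{ij},f_{ij}$ ($1\le i,j\le n$, degree $2$). Form $n\times n$ matrices: $\mathbf{C},\mathbf{D},\mathbf{E},\mathbf{F}$ with entries $c_{ij},d_{ij},e_{ij},f_{ij}$; $\mathbf{A}_{ij}=a_{ij}$ ($i<j$), $-\mu a_{ij}$ ($i>j$), $1-\mu$ ($i=j$); $\mathbf{B}_{ij}=b_{ij}$ ($i<j$), $-\mu b_{ij}$ ($i>j$), $0$ ($i=j$); $\hat{\mathbf{A}}_{ij}=Ua_{ij}$ ($i<j$), $-\mu a_{ij}$ ($i>j$), $U-\mu$ ($i=j$); $\hat{\mathbf{B}}_{ij}=Ub_{ij}$ ($i<j$), $-\mu b_{ij}$ ($i>j$), $0$ ($i=j$). Let $\mathbf{\Lambda}=\mathrm{diag}(\lambda\mu^wU^{-(w-n+1)/2},1,\dots,1)$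 where $w$ is the writhe of $B$ (sum of exponents in the braid word). $\phi_B(\mathbf{A})$ denotes the matrix obtained by applying $\phi_B$ (extended $R$-linearly) to each entry of $\mathbf{A}$. The differential $\partial$ (degree $-1$, $R$-linear, signed Leibniz rule) is given entrywise by: $\partial\mathbf{A}=0$, $\partial\mathbf{B}=\mathbf{A}-\mathbf{\Lambda}\phi_B(\mathbf{A})\mathbf{\Lambda}^{-1}$, $\partial\mathbf{C}=\hat{\mathbf{A}}-\mathbf{\Lambda}\Phi^L_B\mathbf{A}$, $\partial\mathbf{D}=\mathbf{A}-\hat{\mathbf{A}}\Phi^R_B\mathbf{\Lambda}^{-1}$, $\partial\mathbf{E}=\hat{\mathbf{B}}-\mathbf{C}-\mathbf{\Lambda}\Phi^L_B\mathbf{D}$, $\partial\mathbf{F}=\mathbf{B}-\mathbf{D}-\mathbf{C}\Phi^R_B\mathbf{\Lambda}^{-1}$. An augmentation of $(\mathcal{A},\partial)$ to $\mathbb{C}$ is a unital ring homomorphism $\epsilon:\mathcal{A}\to\mathbb{C}$ with $\epsilon\circ\partial=0$ and $\epsilon(a)=0$ for every homogeneous element $a$ of nonzero degree; in particular it restricts to a ring map $R\to\mathbb{C}$ determined by $(\epsilon(\lambda),\epsilon(\mu),\epsilon(U))$. *)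

theory Defs
  imports Complex_Main "Jordan_Normal_Form.Matrix"
begin

text \<open>A braid word in B_n is a list of letters (k, True) = sigma_k and
  (k, False) = sigma_k^(-1), with 1 <= k <= n-1.  Strands are indexed 1..n.\<close>

type_synonym braid = "(nat \<times> bool) list"

definition valid_braid :: "nat \<Rightarrow> braid \<Rightarrow> bool" where
  "valid_braid n B \<longleftrightarrow> (\<forall>(k, s) \<in> set B. 1 \<le> k \<and> k < n)"

definition writhe :: "braid \<Rightarrow> int" where
  "writhe B = (\<Sum>(k, s) \<leftarrow> B. if s then 1 else -1)"

definition swap_strand :: "nat \<Rightarrow> nat \<Rightarrow> nat" where
  "swap_strand k j = (if j = k then k + 1 else if j = k + 1 then k else j)"

text \<open>Permutation of the strands induced by the braid (for the composite
  homeomorphism h_B = h_{s_1} o ... o h_{s_m}).\<close>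
definition braid_perm :: "braid \<Rightarrow> nat \<Rightarrow> nat" where
  "braid_perm B = foldr (\<lambda>(k, s) f. swap_strand k \<circ> f) B id"

text \<open>The closure of B in B_n is a knot (one component) iff the
  strand permutation is an n-cycle.\<close>
definition closure_is_knot :: "nat \<Rightarrow> braid \<Rightarrow> bool" where
  "closure_is_knot n B \<longleftrightarrow> 1 \<le> n \<and>
     (\<forall>j \<in> {1..n}. \<exists>i < n. (braid_perm B ^^ i) 1 = j)"

text \<open>Free group words on x_1, x_2, ...: letters (i, True) = x_i,
  (i, False) = x_i^(-1); a word is the product from left to right.\<close>
type_synonym fword = "(nat \<times> bool) list"

definition finv :: "fword \<Rightarrow> fword" where
  "finv w = rev (map (\<lambda>(i, e). (i, \<not> e)) w)"

definition artin_gen :: "nat \<Rightarrow> bool \<Rightarrow> nat \<Rightarrow> fword" where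
  "artin_gen k s i =
     (if s then
        (if i = k then [(k, True), (k + 1, True), (k, False)]
         else if i = k + 1 then [(k, True)] else [(i, True)])
      else
        (if i = k then [(k + 1, True)]
         else if i = k + 1 then [(k + 1, False), (k, True), (k + 1, True)]
         else [(i, True)]))"

definition artin_word :: "nat \<Rightarrow> bool \<Rightarrow> fword \<Rightarrow> fword" where
  "artin_word k s w =
     concat (map (\<lambda>(i, e). if e then artin_gen k s i else finv (artin_gen k s i)) w)"

definition artin_braid :: "braid \<Rightarrow> fword \<Rightarrow> fword" where
  "artin_braid B w = foldr (\<lambda>(k, s) v. artin_word k s v) B w"

text \<open>Action on arcs from the base point to the blackboard push-off points
  p'_j of the punctures: h_B(gamma'_j) = w_j gamma'_{pi_B(j)} is encoded by
  arcs B j = (w_j, pi_B j).\<close>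
definition arc_corr :: "nat \<Rightarrow> bool \<Rightarrow> nat \<Rightarrow> fword" where
  "arc_corr k s p =
     (if s then (if p = k then [(k, True)] else [])
      else (if p = k + 1 then [(k + 1, False)] else []))"

definition arcs :: "braid \<Rightarrow> nat \<Rightarrow> fword \<times> nat" where
  "arcs B j = foldr (\<lambda>(k, s) (w, p). (artin_word k s w @ arc_corr k s p, swap_strand k p))
                    B ([], j)"

text \<open>Blackboard longitude (parallel push-off of the closure through strand 1),
  and the Seifert-framed longitude l = l_bb * x_1^(-w).\<close>
definition blackboard_longitude :: "nat \<Rightarrow> braid \<Rightarrow> fword" where
  "blackboard_longitude n B =
     concat (map (\<lambda>i. fst (arcs B ((braid_perm B ^^ i) 1))) [0..<n])"

definition meridian_word :: fword where
  "meridian_word = [(1, True)]"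

definition longitude_word :: "nat \<Rightarrow> braid \<Rightarrow> fword" where
  "longitude_word n B = blackboard_longitude n B @
     (if 0 \<le> writhe B then replicate (nat (writhe B)) (1, False)
      else replicate (nat (- writhe B)) (1, True))"

definition mat_inv :: "nat \<Rightarrow> complex mat \<Rightarrow> complex mat" where
  "mat_inv m A = (SOME C. C \<in> carrier_mat m m \<and> A * C = 1\<^sub>m m \<and> C * A = 1\<^sub>m m)"

definition eval_fword :: "nat \<Rightarrow> (nat \<Rightarrow> complex mat) \<Rightarrow> fword \<Rightarrow> complex mat" where
  "eval_fword m X w =
     foldl (\<lambda>R (i, e). R * (if e then X i else mat_inv m (X i))) (1\<^sub>m m) w"

text \<open>A group homomorphism rho from the knot group
  pi_1(S^3 - K) = < x_1..x_n | x_i = phi_B(x_i) > of the closure K of B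
  to GL_m(C), given by the images X i = rho(x_i).\<close>
definition knot_group_rep :: "nat \<Rightarrow> braid \<Rightarrow> nat \<Rightarrow> (nat \<Rightarrow> complex mat) \<Rightarrow> bool" where
  "knot_group_rep n B m X \<longleftrightarrow>
     (\<forall>i \<in> {1..n}. X i \<in> carrier_mat m m \<and> invertible_mat (X i)) \<and>
     (\<forall>i \<in> {1..n}. eval_fword m X (artin_braid B [(i, True)]) = X i)"

datatype gen = Ga nat nat | Gb nat nat | Gc nat nat | Gd nat nat | Ge nat nat | Gf nat nat

fun gdeg :: "gen \<Rightarrow> nat" where
  "gdeg (Ga i j) = 0" | "gdeg (Gb i j) = 1" | "gdeg (Gc i j) = 1"
| "gdeg (Gd i j) = 1" | "gdeg (Ge i j) = 2" | "gdeg (Gf i j) = 2"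

fun gen_in :: "nat \<Rightarrow> gen \<Rightarrow> bool" where
  "gen_in n (Ga i j) = (i \<in> {1..n} \<and> j \<in> {1..n} \<and> i \<noteq> j)"
| "gen_in n (Gb i j) = (i \<in> {1..n} \<and> j \<in> {1..n} \<and> i \<noteq> j)"
| "gen_in n (Gc i j) = (i \<in> {1..n} \<and> j \<in> {1..n})"
| "gen_in n (Gd i j) = (i \<in> {1..n} \<and> j \<in> {1..n})"
| "gen_in n (Ge i j) = (i \<in> {1..n} \<and> j \<in> {1..n})"
| "gen_in n (Gf i j) = (i \<in> {1..n} \<and> j \<in> {1..n})"

text \<open>Terms denoting elements of the free noncommutative unital algebra over
  R = Z[lambda^(+-1), mu^(+-1), U^(+-1)] (every element is denoted by a term).\<close>
datatype dterm = Gen gen | Cst int | Lam | LamI | Mu | MuI | Uu | UuI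
  | Add dterm dterm | Mul dterm dterm

definition Neg :: "dterm \<Rightarrow> dterm" where "Neg t = Mul (Cst (-1)) t"
definition Sub :: "dterm \<Rightarrow> dterm \<Rightarrow> dterm" where "Sub s t = Add s (Neg t)"

fun tpow :: "dterm \<Rightarrow> dterm \<Rightarrow> int \<Rightarrow> dterm" where
  "tpow x xi k = (if k \<ge> 0 then foldr Mul (replicate (nat k) x) (Cst 1)
                   else foldr Mul (replicate (nat (- k)) xi) (Cst 1))"

fun all_gens :: "(gen \<Rightarrow> bool) \<Rightarrow> dterm \<Rightarrow> bool" where
  "all_gens P (Gen g) = P g"
| "all_gens P (Add s t) = (all_gens P s \<and> all_gens P t)"
| "all_gens P (Mul s t) = (all_gens P s \<and> all_gens P t)"
| "all_gens P _ = True"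

text \<open>Evaluation = the unique unital ring homomorphism into C determined by
  its values on the generators and on lambda, mu, U.\<close>
fun teval :: "(gen \<Rightarrow> complex) \<Rightarrow> complex \<Rightarrow> complex \<Rightarrow> complex \<Rightarrow> dterm \<Rightarrow> complex" where
  "teval e l m u (Gen g) = e g"
| "teval e l m u (Cst c) = of_int c"
| "teval e l m u Lam = l"
| "teval e l m u LamI = inverse l"
| "teval e l m u Mu = m"
| "teval e l m u MuI = inverse m"
| "teval e l m u Uu = u"
| "teval e l m u UuI = inverse u"
| "teval e l m u (Add s t) = teval e l m u s + teval e l m u t"
| "teval e l m u (Mul s t) = teval e l m u s * teval e l m u t"

fun subst_a :: "(nat \<Rightarrow> nat \<Rightarrow> dterm) \<Rightarrow> dterm \<Rightarrow> dterm" where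
  "subst_a f (Gen (Ga i j)) = f i j"
| "subst_a f (Add s t) = Add (subst_a f s) (subst_a f t)"
| "subst_a f (Mul s t) = Mul (subst_a f s) (subst_a f t)"
| "subst_a f t = t"

definition a :: "nat \<Rightarrow> nat \<Rightarrow> dterm" where "a i j = Gen (Ga i j)"

text \<open>phi_{sigma_k} (s = True) and its inverse phi_{sigma_k^(-1)} (s = False)
  on the generators a_ij.\<close>
definition phi_gen :: "nat \<Rightarrow> bool \<Rightarrow> nat \<Rightarrow> nat \<Rightarrow> dterm" where
  "phi_gen k s i j =
    (if i = k \<and> j = k + 1 then Neg (a (k + 1) k)
     else if i = k + 1 \<and> j = k then Neg (a k (k + 1))
     else if s then
       (if i = k + 1 then a k j
        else if j = k + 1 then a i k
        else if i = k then Sub (a (k + 1) j) (Mul (a (k + 1) k) (a k j))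
        else if j = k then Sub (a i (k + 1)) (Mul (a i k) (a k (k + 1)))
        else a i j)
     else
       (if i = k then a (k + 1) j
        else if j = k then a i (k + 1)
        else if i = k + 1 then Sub (a k j) (Mul (a k (k + 1)) (a (k + 1) j))
        else if j = k + 1 then Sub (a i k) (Mul (a i (k + 1)) (a (k + 1) k))
        else a i j))"

definition phi_braid :: "braid \<Rightarrow> dterm \<Rightarrow> dterm" where
  "phi_braid B t = foldr (\<lambda>(k, s) v. subst_a (phi_gen k s) v) B t"

text \<open>Coefficient extraction (phi_B(a_{i*}) is linear in the a_{j*}, each
  monomial having exactly one factor a_{j*}; the product clause is exact since
  the factor without a star-generator contributes 0): phi_B(a_{i*}) = sum_j (PhiL)_ij a_{j*} and
  phi_B(a_{*i}) = sum_j a_{*j} (PhiR)_ji, with * = strand n+1.\<close>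
fun coeffL :: "nat \<Rightarrow> nat \<Rightarrow> dterm \<Rightarrow> dterm" where
  "coeffL st j (Gen (Ga i k)) = (if i = j \<and> k = st then Cst 1 else Cst 0)"
| "coeffL st j (Add s t) = Add (coeffL st j s) (coeffL st j t)"
| "coeffL st j (Mul s t) = Add (Mul (coeffL st j s) t) (Mul s (coeffL st j t))"
| "coeffL st j t = Cst 0"

fun coeffR :: "nat \<Rightarrow> nat \<Rightarrow> dterm \<Rightarrow> dterm" where
  "coeffR st j (Gen (Ga k i)) = (if i = j \<and> k = st then Cst 1 else Cst 0)"
| "coeffR st j (Add s t) = Add (coeffR st j s) (coeffR st j t)"
| "coeffR st j (Mul s t) = Add (Mul (coeffR st j s) t) (Mul s (coeffR st j t))"
| "coeffR st j t = Cst 0"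

definition PhiL :: "nat \<Rightarrow> braid \<Rightarrow> nat \<Rightarrow> nat \<Rightarrow> dterm" where
  "PhiL n B i j = coeffL (n + 1) j (phi_braid B (a i (n + 1)))"

definition PhiR :: "nat \<Rightarrow> braid \<Rightarrow> nat \<Rightarrow> nat \<Rightarrow> dterm" where
  "PhiR n B j i = coeffR (n + 1) j (phi_braid B (a (n + 1) i))"

text \<open>n x n matrices of terms, indexed by 1..n.\<close>
type_synonym tmat = "nat \<Rightarrow> nat \<Rightarrow> dterm"

definition mmul :: "nat \<Rightarrow> tmat \<Rightarrow> tmat \<Rightarrow> tmat" where
  "mmul n X Y i j = foldr Add (map (\<lambda>k. Mul (X i k) (Y k j)) [1..<n + 1]) (Cst 0)"

definition mminus :: "tmat \<Rightarrow> tmat \<Rightarrow> tmat" where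
  "mminus X Y i j = Sub (X i j) (Y i j)"

definition Amat :: tmat where
  "Amat i j = (if i < j then a i j else if j < i then Mul (Neg Mu) (a i j) else Sub (Cst 1) Mu)"
definition Ahat :: tmat where
  "Ahat i j = (if i < j then Mul Uu (a i j) else if j < i then Mul (Neg Mu) (a i j) else Sub Uu Mu)"
definition Bhat :: tmat where
  "Bhat i j = (if i < j then Mul Uu (Gen (Gb i j)) else if j < i then Mul (Neg Mu) (Gen (Gb i j))
               else Cst 0)"
definition Bmat :: tmat where
  "Bmat i j = (if i < j then Gen (Gb i j) else if j < i then Mul (Neg Mu) (Gen (Gb i j))
               else Cst 0)"
definition Cmat :: tmat where "Cmat i j = Gen (Gc i j)"
definition Dmat :: tmat where "Dmat i j = Gen (Gd i j)"

definition Lam_exp :: "nat \<Rightarrow> braid \<Rightarrow> int" where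
  "Lam_exp n B = - ((writhe B - int n + 1) div 2)"

definition Lmat :: "nat \<Rightarrow> braid \<Rightarrow> tmat" where
  "Lmat n B i j = (if i = j then (if i = 1 then
      Mul Lam (Mul (tpow Mu MuI (writhe B)) (tpow Uu UuI (Lam_exp n B))) else Cst 1) else Cst 0)"

definition Linv :: "nat \<Rightarrow> braid \<Rightarrow> tmat" where
  "Linv n B i j = (if i = j then (if i = 1 then
      Mul LamI (Mul (tpow MuI Mu (writhe B)) (tpow UuI Uu (Lam_exp n B))) else Cst 1) else Cst 0)"

definition dB_rhs :: "nat \<Rightarrow> braid \<Rightarrow> tmat" where
  "dB_rhs n B = mminus Amat (mmul n (mmul n (Lmat n B) (\<lambda>i j. phi_braid B (Amat i j))) (Linv n B))"
definition dC_rhs :: "nat \<Rightarrow> braid \<Rightarrow> tmat" where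
  "dC_rhs n B = mminus Ahat (mmul n (mmul n (Lmat n B) (PhiL n B)) Amat)"
definition dD_rhs :: "nat \<Rightarrow> braid \<Rightarrow> tmat" where
  "dD_rhs n B = mminus Amat (mmul n (mmul n Ahat (PhiR n B)) (Linv n B))"
definition dE_rhs :: "nat \<Rightarrow> braid \<Rightarrow> tmat" where
  "dE_rhs n B = mminus (mminus Bhat Cmat) (mmul n (mmul n (Lmat n B) (PhiL n B)) Dmat)"
definition dF_rhs :: "nat \<Rightarrow> braid \<Rightarrow> tmat" where
  "dF_rhs n B = mminus (mminus Bmat Dmat) (mmul n (mmul n Cmat (PhiR n B)) (Linv n B))"

text \<open>Differential of the generators (the entries of dB equal the entries of
  Bmat, which are b_ij for i<j and -mu b_ij for i>j; R-linearity gives the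
  formula for b_ij with i > j).\<close>
fun dgen :: "nat \<Rightarrow> braid \<Rightarrow> gen \<Rightarrow> dterm" where
  "dgen n B (Ga i j) = Cst 0"
| "dgen n B (Gb i j) = (if i < j then dB_rhs n B i j else Mul (Neg MuI) (dB_rhs n B i j))"
| "dgen n B (Gc i j) = dC_rhs n B i j"
| "dgen n B (Gd i j) = dD_rhs n B i j"
| "dgen n B (Ge i j) = dE_rhs n B i j"
| "dgen n B (Gf i j) = dF_rhs n B i j"

fun par :: "dterm \<Rightarrow> dterm" where
  "par (Gen g) = (if odd (gdeg g) then Neg (Gen g) else Gen g)"
| "par (Add s t) = Add (par s) (par t)"
| "par (Mul s t) = Mul (par s) (par t)"
| "par t = t"

fun dga_d :: "nat \<Rightarrow> braid \<Rightarrow> dterm \<Rightarrow> dterm" where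
  "dga_d n B (Gen g) = dgen n B g"
| "dga_d n B (Add s t) = Add (dga_d n B s) (dga_d n B t)"
| "dga_d n B (Mul s t) = Add (Mul (dga_d n B s) t) (Mul (par s) (dga_d n B t))"
| "dga_d n B t = Cst 0"

text \<open>An augmentation of the knot DGA of (the closure of) B to C with
  (eps(lambda), eps(mu), eps(U)) = (l, m, u): a unital ring homomorphism,
  given by its values e on the generators, killing all generators of nonzero
  degree (equivalently all homogeneous elements of nonzero degree) and with
  eps o d = 0 on the whole algebra.\<close>
definition is_augmentation ::
  "nat \<Rightarrow> braid \<Rightarrow> (gen \<Rightarrow> complex) \<Rightarrow> complex \<Rightarrow> complex \<Rightarrow> complex \<Rightarrow> bool" where
  "is_augmentation n B e l m u \<longleftrightarrow>
     l \<noteq> 0 \<and> m \<noteq> 0 \<and> u \<noteq> 0 \<and>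
     (\<forall>g. gen_in n g \<longrightarrow> gdeg g \<noteq> 0 \<longrightarrow> e g = 0) \<and>
     (\<forall>t. all_gens (gen_in n) t \<longrightarrow> teval e l m u (dga_d n B t) = 0)"

end

theory Submission
  imports Defs
begin

locale msetup =
  fixes m :: nat
  assumes m_pos: "0 < m"
begin

definition minv :: "complex mat \<Rightarrow> complex mat" where "minv A = mat_inv m A"

definition invm :: "complex mat \<Rightarrow> bool" where
  "invm A \<longleftrightarrow> A \<in> carrier_mat m m \<and> (\<exists>B \<in> carrier_mat m m. A * B = 1\<^sub>m m \<and> B * A = 1\<^sub>m m)"

lemma invm_minv:
  assumes "invm A"
  shows "minv A \<in> carrier_mat m m" "A * minv A = 1\<^sub>m m" "minv A * A = 1\<^sub>m m"
proof -
  from assms obtain B where "B \<in> carrier_mat m m \<and> A * B = 1\<^sub>m m \<and> B * A = 1\<^sub>m m"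
    unfolding invm_def by auto
  hence "minv A \<in> carrier_mat m m \<and> A * minv A = 1\<^sub>m m \<and> minv A * A = 1\<^sub>m m"
    unfolding minv_def mat_inv_def by (rule someI)
  thus "minv A \<in> carrier_mat m m" "A * minv A = 1\<^sub>m m" "minv A * A = 1\<^sub>m m" by auto
qed

lemma invm_carrier: "invm A \<Longrightarrow> A \<in> carrier_mat m m" unfolding invm_def by auto

lemma invm_one_mult[simp]: "invm A \<Longrightarrow> 1\<^sub>m m * A = A" "invm A \<Longrightarrow> A * 1\<^sub>m m = A"
  using invm_carrier left_mult_one_mat right_mult_one_mat by blast+

lemma cancel_rules:
  assumes "invm A" "C \<in> carrier_mat m n"
  shows "A * (minv A * C) = C" "minv A * (A * C) = C"
proof -
  note a = invm_minv[OF assms(1)] invm_carrier[OF assms(1)]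
  have "A * (minv A * C) = (A * minv A) * C" using assoc_mult_mat[OF a(4) a(1) assms(2)] by simp
  thus "A * (minv A * C) = C" using a(2) left_mult_one_mat[OF assms(2)] by simp
  have "minv A * (A * C) = (minv A * A) * C" using assoc_mult_mat[OF a(1) a(4) assms(2)] by simp
  thus "minv A * (A * C) = C" using a(3) left_mult_one_mat[OF assms(2)] by simp
qed

lemma minv_unique:
  assumes "invm A" "C \<in> carrier_mat m m" "A * C = 1\<^sub>m m"
  shows "minv A = C"
proof -
  have A: "A \<in> carrier_mat m m" using assms invm_carrier by auto
  have "minv A = minv A * (A * C)" using assms(3) right_mult_one_mat[OF invm_minv(1)[OF assms(1)]] by simp
  also have "\<dots> = C" using cancel_rules(2)[OF assms(1,2)] .
  finally show ?thesis .
qed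

lemma minv_unique_left:
  assumes "invm A" "C \<in> carrier_mat m m" "C * A = 1\<^sub>m m"
  shows "minv A = C"
proof -
  have A: "A \<in> carrier_mat m m" using assms invm_carrier by auto
  have "minv A = (C * A) * minv A" using assms(3) left_mult_one_mat[OF invm_minv(1)[OF assms(1)]] by simp
  also have "\<dots> = C * (A * minv A)" using assoc_mult_mat[OF assms(2) A invm_minv(1)[OF assms(1)]] .
  also have "\<dots> = C" using invm_minv[OF assms(1)] right_mult_one_mat[OF assms(2)] by simp
  finally show ?thesis .
qed

lemma invm_minv_invm: "invm A \<Longrightarrow> invm (minv A)"
  unfolding invm_def[of "minv A"] using invm_minv invm_carrier by blast

lemma minv_minv: "invm A \<Longrightarrow> minv (minv A) = A"
  by (rule minv_unique[OF invm_minv_invm]) (auto simp: invm_minv invm_carrier)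

lemma invm_one: "invm (1\<^sub>m m)" unfolding invm_def by (intro conjI bexI[of _ "1\<^sub>m m"]) auto

lemma minv_one: "minv (1\<^sub>m m) = 1\<^sub>m m"
  by (rule minv_unique[OF invm_one]) auto

lemma invm_mult:
  assumes "invm A" "invm B"
  shows "invm (A * B)" "minv (A * B) = minv B * minv A"
proof -
  note a = invm_minv[OF assms(1)] invm_carrier[OF assms(1)]
  note b = invm_minv[OF assms(2)] invm_carrier[OF assms(2)]
  have 1: "(A * B) * (minv B * minv A) = 1\<^sub>m m"
  proof -
    have "(A * B) * (minv B * minv A) = A * (B * (minv B * minv A))"
      using a b by (meson assoc_mult_mat mult_carrier_mat)
    thus ?thesis using a b cancel_rules[OF assms(2)] cancel_rules[OF assms(1)] by simp
  qed
  have 2: "(minv B * minv A) * (A * B) = 1\<^sub>m m"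
  proof -
    have "(minv B * minv A) * (A * B) = minv B * (minv A * (A * B))"
      using a b by (meson assoc_mult_mat mult_carrier_mat)
    thus ?thesis using a b cancel_rules[OF assms(2)] cancel_rules[OF assms(1)] by simp
  qed
  show "invm (A * B)" unfolding invm_def using a b 1 2
    by (intro conjI bexI[of _ "minv B * minv A"]) auto
  thus "minv (A * B) = minv B * minv A" using 1 a b by (intro minv_unique) auto
qed

lemma invertible_invm: "A \<in> carrier_mat m m \<Longrightarrow> invertible_mat A \<Longrightarrow> invm A"
proof -
  assume A: "A \<in> carrier_mat m m" and "invertible_mat A"
  then obtain B where "inverts_mat A B" "inverts_mat B A" unfolding invertible_mat_def by auto
  hence AB: "A * B = 1\<^sub>m m" and BA: "B * A = 1\<^sub>m (dim_row B)" using A unfolding inverts_mat_def by auto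
  have "dim_col B = m" using AB by (metis index_mult_mat(3) index_one_mat(3))
  moreover have "dim_row B = m" using BA A by (metis index_mult_mat(3) index_one_mat(3) carrier_matD(2))
  ultimately have "B \<in> carrier_mat m m" by auto
  thus "invm A" unfolding invm_def using A AB BA \<open>dim_row B = m\<close> by auto
qed

lemma mult_entry:
  assumes "A \<in> carrier_mat m m" "B \<in> carrier_mat m m" "i < m" "j < m"
  shows "(A * B) $$ (i, j) = (\<Sum>l<m. A $$ (i, l) * B $$ (l, j))"
  using assms by (simp add: scalar_prod_def row_def col_def lessThan_atLeast0)

definition Dg :: "complex \<Rightarrow> complex mat" where
  "Dg d = mat m m (\<lambda>(i, j). if i = j then (if i = 0 then d else 1) else 0)"

lemma Dg_carrier[simp]: "Dg d \<in> carrier_mat m m" unfolding Dg_def by auto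
lemma Dg_dim[simp]: "dim_row (Dg d) = m" "dim_col (Dg d) = m" unfolding Dg_def by auto

lemma sum_single: "j < m \<Longrightarrow> (\<Sum>l<m. f l * (if l = j then c else 0)) = f j * (c::complex)"
  by (simp add: if_distrib[of "\<lambda>x. f _ * x"] cong: if_cong)

lemma sum_single': "j < m \<Longrightarrow> (\<Sum>l<m. (if j = l then c else 0) * f l) = (c::complex) * f j"
  by (simp add: if_distrib[of "\<lambda>x. x * f _"] cong: if_cong)

lemma Dg_index: "i < m \<Longrightarrow> j < m \<Longrightarrow> Dg d $$ (i, j) = (if i = j then (if i = 0 then d else 1) else 0)"
  unfolding Dg_def by simp

lemma mult_Dg_index:
  assumes "A \<in> carrier_mat m m" "i < m" "j < m"
  shows "(A * Dg d) $$ (i, j) = A $$ (i, j) * (if j = 0 then d else 1)"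
proof -
  have "(A * Dg d) $$ (i, j) = (\<Sum>l<m. A $$ (i, l) * (if l = j then (if j = 0 then d else 1) else 0))"
    using assms by (simp del: index_mult_mat add: mult_entry Dg_index cong: if_cong)
  thus ?thesis using sum_single assms by simp
qed

lemma Dg_mult_index:
  assumes "A \<in> carrier_mat m m" "i < m" "j < m"
  shows "(Dg d * A) $$ (i, j) = (if i = 0 then d else 1) * A $$ (i, j)"
proof -
  have "(Dg d * A) $$ (i, j) = (\<Sum>l<m. (if i = l then (if i = 0 then d else 1) else 0) * A $$ (l, j))"
    using assms by (simp del: index_mult_mat add: mult_entry Dg_index cong: if_cong)
  thus ?thesis using sum_single' assms by simp
qed

lemma Dg_mult: "Dg c * Dg d = Dg (c * d)"
  by (rule eq_matI) (auto simp del: index_mult_mat(1) simp: Dg_mult_index Dg_index)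

lemma Dg_one: "Dg 1 = 1\<^sub>m m"
  by (rule eq_matI) (auto simp: Dg_index)

lemma Dg_invm: "d \<noteq> 0 \<Longrightarrow> invm (Dg d)" "d \<noteq> 0 \<Longrightarrow> minv (Dg d) = Dg (inverse d)"
proof -
  assume d: "d \<noteq> 0"
  have 1: "Dg d * Dg (inverse d) = 1\<^sub>m m" "Dg (inverse d) * Dg d = 1\<^sub>m m" using d by (auto simp: Dg_mult Dg_one)
  show "invm (Dg d)" unfolding invm_def using 1 by (intro conjI bexI[of _ "Dg (inverse d)"]) auto
  thus "minv (Dg d) = Dg (inverse d)" using 1 by (intro minv_unique) auto
qed

lemma Dg_sandwich:
  assumes "A \<in> carrier_mat m m" "B \<in> carrier_mat m m"
  shows "(A * Dg d * B) $$ (0, 0) = (A * B) $$ (0, 0) + (d - 1) * A $$ (0, 0) * B $$ (0, 0)"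
proof -
  have "(A * Dg d * B) $$ (0, 0) = (\<Sum>l<m. (A * Dg d) $$ (0, l) * B $$ (l, 0))"
    using assms m_pos by (simp del: index_mult_mat add: mult_entry)
  also have "\<dots> = (\<Sum>l<m. A $$ (0, l) * B $$ (l, 0) + (if l = 0 then (d - 1) * A $$ (0, 0) * B $$ (0, 0) else 0))"
    using assms m_pos by (intro sum.cong) (auto simp del: index_mult_mat(1) simp: mult_Dg_index algebra_simps)
  also have "\<dots> = (A * B) $$ (0, 0) + (d - 1) * A $$ (0, 0) * B $$ (0, 0)"
    using assms m_pos by (simp del: index_mult_mat add: sum.distrib mult_entry)
  finally show ?thesis .
qed

end

section \<open>Free group word combinatorics\<close>

lemma finv_append[simp]: "finv (u @ v) = finv v @ finv u" unfolding finv_def by simp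
lemma finv_Nil[simp]: "finv [] = []" unfolding finv_def by simp
lemma finv_finv[simp]: "finv (finv u) = u" unfolding finv_def by (induction u) auto
lemma finv_concat: "finv (concat ws) = concat (rev (map finv ws))"
  by (induction ws) auto

lemma artin_word_append[simp]: "artin_word k s (u @ v) = artin_word k s u @ artin_word k s v"
  unfolding artin_word_def by simp
lemma artin_word_Nil[simp]: "artin_word k s [] = []" unfolding artin_word_def by simp
lemma artin_word_Cons: "artin_word k s (x # u) =
   (if snd x then artin_gen k s (fst x) else finv (artin_gen k s (fst x))) @ artin_word k s u"
  unfolding artin_word_def by (cases x) simp

lemma artin_word_finv: "artin_word k s (finv u) = finv (artin_word k s u)"
proof (induction u)
  case Nil thus ?case by simp
next
  case (Cons x u)
  obtain i e where x: "x = (i, e)" by (cases x)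
  have "finv (x # u) = finv u @ finv [x]" using finv_append[of "[x]" u] by simp
  moreover have "finv [x] = [(i, \<not> e)]" unfolding finv_def x by simp
  ultimately show ?case using Cons unfolding x by (simp add: artin_word_def)
qed

lemma arcs_Nil[simp]: "arcs [] j = ([], j)" unfolding arcs_def by simp
lemma arcs_Cons: "arcs ((k, s) # B) j =
   (artin_word k s (fst (arcs B j)) @ arc_corr k s (snd (arcs B j)), swap_strand k (snd (arcs B j)))"
  unfolding arcs_def by (simp split: prod.split)

lemma braid_perm_Nil[simp]: "braid_perm [] = id" unfolding braid_perm_def by simp
lemma braid_perm_Cons: "braid_perm ((k, s) # B) = swap_strand k \<circ> braid_perm B"
  unfolding braid_perm_def by simp

lemma arcs_snd: "snd (arcs B j) = braid_perm B j"
  by (induction B) (auto simp: arcs_Cons braid_perm_Cons)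

lemma artin_braid_Cons: "artin_braid ((k, s) # B) w = artin_word k s (artin_braid B w)"
  unfolding artin_braid_def by simp
lemma artin_braid_Nil[simp]: "artin_braid [] w = w" unfolding artin_braid_def by simp

lemma artin_gen_corr: "artin_gen k s p = arc_corr k s p @ [(swap_strand k p, True)] @ finv (arc_corr k s p)"
  unfolding artin_gen_def arc_corr_def swap_strand_def finv_def by auto

lemma artin_braid_gen:
  "artin_braid B [(j, True)] = fst (arcs B j) @ [(braid_perm B j, True)] @ finv (fst (arcs B j))"
proof (induction B)
  case Nil thus ?case by simp
next
  case (Cons x B)
  obtain k s where x: "x = (k, s)" by (cases x)
  show ?case using Cons unfolding x
    by (simp add: artin_braid_Cons arcs_Cons braid_perm_Cons artin_word_finv artin_word_Cons
                  arcs_snd artin_gen_corr)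
qed

section \<open>Evaluation of words\<close>

context msetup
begin

definition lt :: "(nat \<Rightarrow> complex mat) \<Rightarrow> nat \<times> bool \<Rightarrow> complex mat" where
  "lt X x = (if snd x then X (fst x) else minv (X (fst x)))"

lemma foldl_carrier:
  assumes "\<forall>i. invm (X i)" "A \<in> carrier_mat m m"
  shows "foldl (\<lambda>R (i, e). R * (if e then X i else mat_inv m (X i))) A w \<in> carrier_mat m m"
  using assms(2)
proof (induction w arbitrary: A)
  case Nil thus ?case by simp
next
  case (Cons x w)
  obtain i e where x: "x = (i, e)" by (cases x)
  have c: "(if e then X i else mat_inv m (X i)) \<in> carrier_mat m m"
    using assms(1) invm_minv invm_carrier unfolding minv_def by auto
  show ?case using Cons(1)[of "A * (if e then X i else mat_inv m (X i))"] Cons(2) c unfolding x by simp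
qed

lemma ev_carrier: "\<forall>i. invm (X i) \<Longrightarrow> eval_fword m X w \<in> carrier_mat m m"
  unfolding eval_fword_def by (rule foldl_carrier) auto

lemma eval_foldl:
  assumes "\<forall>i. invm (X i)" "A \<in> carrier_mat m m"
  shows "foldl (\<lambda>R (i, e). R * (if e then X i else mat_inv m (X i))) A w = A * eval_fword m X w"
  using assms(2)
proof (induction w arbitrary: A)
  case Nil thus ?case by (simp add: eval_fword_def right_mult_one_mat)
next
  case (Cons x w)
  obtain i e where x: "x = (i, e)" by (cases x)
  have c: "(if e then X i else mat_inv m (X i)) \<in> carrier_mat m m"
    using assms(1) invm_minv invm_carrier unfolding minv_def by auto
  have e: "eval_fword m X w \<in> carrier_mat m m" using ev_carrier assms(1) by auto
  have "foldl (\<lambda>R (i, e). R * (if e then X i else mat_inv m (X i))) A (x # w)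
      = (A * (if e then X i else mat_inv m (X i))) * eval_fword m X w"
    using Cons c unfolding x by simp
  moreover have "eval_fword m X (x # w) = (if e then X i else mat_inv m (X i)) * eval_fword m X w"
    using Cons(1)[OF c] c unfolding x eval_fword_def by (simp add: left_mult_one_mat)
  ultimately show ?case using Cons c e by simp
qed

lemma ev_Nil[simp]: "eval_fword m X [] = 1\<^sub>m m" unfolding eval_fword_def by simp

lemma ev_Cons: "\<forall>i. invm (X i) \<Longrightarrow> eval_fword m X (x # w) = lt X x * eval_fword m X w"
proof -
  assume a: "\<forall>i. invm (X i)"
  obtain i e where x: "x = (i, e)" by (cases x)
  have c: "(if e then X i else mat_inv m (X i)) \<in> carrier_mat m m"
    using a invm_minv invm_carrier unfolding minv_def by auto
  show ?thesis using eval_foldl[OF a c, of w] c unfolding x eval_fword_def lt_def minv_def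
    by (simp add: left_mult_one_mat)
qed

lemma lt_invm[simp]: "\<forall>i. invm (X i) \<Longrightarrow> invm (lt X x)"
  unfolding lt_def using invm_minv_invm by auto

lemma ev_invm: "\<forall>i. invm (X i) \<Longrightarrow> invm (eval_fword m X w)"
  by (induction w) (auto simp: ev_Cons invm_one invm_mult)

lemma ev_append: "\<forall>i. invm (X i) \<Longrightarrow> eval_fword m X (u @ v) = eval_fword m X u * eval_fword m X v"
proof (induction u)
  case Nil thus ?case using ev_invm[OF Nil] by simp
next
  case (Cons x u)
  have "lt X x * eval_fword m X u * eval_fword m X v = lt X x * (eval_fword m X u * eval_fword m X v)"
    using ev_carrier[OF Cons(2)] lt_invm[OF Cons(2)] invm_carrier by (meson assoc_mult_mat)
  thus ?case using Cons by (simp add: ev_Cons)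
qed

lemma ev_single: "\<forall>i. invm (X i) \<Longrightarrow> eval_fword m X [(i, True)] = X i"
  "\<forall>i. invm (X i) \<Longrightarrow> eval_fword m X [(i, False)] = minv (X i)"
  by (auto simp: ev_Cons lt_def invm_minv_invm)

lemma ev_finv: "\<forall>i. invm (X i) \<Longrightarrow> eval_fword m X (finv w) = minv (eval_fword m X w)"
proof (induction w)
  case Nil thus ?case by (simp add: minv_one)
next
  case (Cons x w)
  have f: "finv (x # w) = finv w @ [(fst x, \<not> snd x)]" unfolding finv_def by (cases x) simp
  have "lt X (fst x, \<not> snd x) = minv (lt X x)"
    unfolding lt_def using Cons(2) minv_minv by auto
  moreover have "eval_fword m X [(fst x, \<not> snd x)] = lt X (fst x, \<not> snd x)"
    using Cons(2) by (simp add: ev_Cons)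
  ultimately show ?case using Cons f
    by (simp add: ev_append ev_Cons invm_mult ev_invm)
qed

lemma ev_cong: "(\<forall>x\<in>set w. X (fst x) = Y (fst x)) \<Longrightarrow> eval_fword m X w = eval_fword m Y w"
  unfolding eval_fword_def by (induction w rule: rev_induct) auto

end

context msetup
begin

lemma mult_m[simp]: "A \<in> carrier_mat m m \<Longrightarrow> B \<in> carrier_mat m m \<Longrightarrow> A * B \<in> carrier_mat m m"
  by auto

lemmas assoc_m = assoc_mult_mat[of _ m m _ m _ m]

lemma cancel_m[simp]: "invm A \<Longrightarrow> C \<in> carrier_mat m m \<Longrightarrow> A * (minv A * C) = C"
  "invm A \<Longrightarrow> C \<in> carrier_mat m m \<Longrightarrow> minv A * (A * C) = C"
  "invm A \<Longrightarrow> A * minv A = 1\<^sub>m m" "invm A \<Longrightarrow> minv A * A = 1\<^sub>m m"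
  using cancel_rules invm_minv by auto

lemma minv_carrier[simp]: "invm A \<Longrightarrow> minv A \<in> carrier_mat m m" using invm_minv by auto

lemma H1:
  assumes "invm A" "invm B" "invm C"
  shows "(minv A * (B * Dg d * minv B) * C) $$ (0, 0) =
     (minv A * C) $$ (0, 0) + (d - 1) * (minv A * B) $$ (0, 0) * (minv B * C) $$ (0, 0)"
proof -
  note c = invm_carrier[OF assms(1)] invm_carrier[OF assms(2)] invm_carrier[OF assms(3)]
    minv_carrier[OF assms(1)] minv_carrier[OF assms(2)]
  have "minv A * (B * Dg d * minv B) * C = (minv A * B) * Dg d * (minv B * C)"
    using c by (simp add: assoc_m)
  moreover have "(minv A * B) * (minv B * C) = minv A * C"
    using c assms by (simp add: assoc_m)
  ultimately show ?thesis using Dg_sandwich[of "minv A * B" "minv B * C" d] c by simp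
qed

end

locale dsetup = msetup +
  fixes mu :: complex
  assumes mu_nz: "mu \<noteq> 0"
begin

definition Xd :: "(nat \<Rightarrow> complex mat) \<Rightarrow> nat \<Rightarrow> complex mat" where
  "Xd M i = M i * Dg mu * minv (M i)"

definition Xi :: "(nat \<Rightarrow> complex mat) \<Rightarrow> nat \<Rightarrow> complex mat" where
  "Xi M i = M i * Dg (inverse mu) * minv (M i)"

definition pp :: "(nat \<Rightarrow> complex mat) \<Rightarrow> nat \<Rightarrow> nat \<Rightarrow> complex" where
  "pp M i j = (minv (M i) * M j) $$ (0, 0)"

definition allinv :: "(nat \<Rightarrow> complex mat) \<Rightarrow> bool" where
  "allinv M \<longleftrightarrow> (\<forall>i. invm (M i))"

lemma Xd_invm: "invm A \<Longrightarrow> invm (A * Dg d * minv A) \<and> minv (A * Dg d * minv A) = A * Dg (inverse d) * minv A"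
  if "d \<noteq> 0" for A d
proof -
  assume a: "invm A"
  have "invm (A * Dg d)" using invm_mult Dg_invm that a by auto
  hence i: "invm (A * Dg d * minv A)" using invm_mult invm_minv_invm a by auto
  have "minv (A * Dg d * minv A) = minv (minv A) * minv (A * Dg d)"
    using invm_mult invm_minv_invm a \<open>invm (A * Dg d)\<close> by auto
  also have "\<dots> = A * (minv (Dg d) * minv A)" using invm_mult a Dg_invm that minv_minv
    by (simp add: assoc_m invm_carrier)
  finally show ?thesis using i Dg_invm that a by (simp add: assoc_m invm_carrier)
qed

lemma Xd_props: "invm (M i) \<Longrightarrow> invm (Xd M i) \<and> minv (Xd M i) = Xi M i \<and> invm (Xi M i) \<and> minv (Xi M i) = Xd M i"
  unfolding Xd_def Xi_def using Xd_invm[of mu "M i"] Xd_invm[of "inverse mu" "M i"] mu_nz by auto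

lemma pp_diag[simp]: "invm (M i) \<Longrightarrow> pp M i i = 1"
  unfolding pp_def using m_pos by simp

definition Tg :: "nat \<Rightarrow> bool \<Rightarrow> (nat \<Rightarrow> complex mat) \<Rightarrow> (nat \<Rightarrow> complex mat)" where
  "Tg k s M = (if s then M(k := Xd M k * M (k + 1), k + 1 := M k)
               else M(k := M (k + 1), k + 1 := Xi M (k + 1) * M k))"

lemma Tg_allinv: "allinv M \<Longrightarrow> allinv (Tg k s M)"
  unfolding allinv_def Tg_def using Xd_props invm_mult by auto

lemma pp_Tg_True:
  assumes "allinv M"
  shows "pp (Tg k True M) i j =
    (if i = k then
       (if j = k then 1
        else if j = k + 1 then inverse mu * pp M (k + 1) k
        else pp M (k + 1) j + (inverse mu - 1) * pp M (k + 1) k * pp M k j)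
     else if i = k + 1 then
       (if j = k then mu * pp M k (k + 1) else if j = k + 1 then 1 else pp M k j)
     else
       (if j = k then pp M i (k + 1) + (mu - 1) * pp M i k * pp M k (k + 1)
        else if j = k + 1 then pp M i k else pp M i j))"
proof -
  have inv: "\<And>i. invm (M i)" using assms unfolding allinv_def by auto
  note X = Xd_props[OF inv]
  have c: "\<And>i. M i \<in> carrier_mat m m" "\<And>i. minv (M i) \<in> carrier_mat m m"
    using inv invm_carrier by auto
  have mk: "minv (Xd M k * M (k + 1)) = minv (M (k + 1)) * Xi M k"
    using invm_mult X inv by auto
  have e1: "\<And>j. (minv (M (k + 1)) * Xi M k * M j) $$ (0, 0) =
       pp M (k + 1) j + (inverse mu - 1) * pp M (k + 1) k * pp M k j"
    unfolding pp_def Xi_def using H1 inv by auto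
  have e2: "\<And>i. (minv (M i) * (Xd M k * M (k + 1))) $$ (0, 0) =
       pp M i (k + 1) + (mu - 1) * pp M i k * pp M k (k + 1)"
    unfolding pp_def Xd_def using H1[OF inv inv inv, symmetric] c by (simp add: assoc_m)
  have T: "Tg k True M = M(k := Xd M k * M (k + 1), k + 1 := M k)" unfolding Tg_def by simp
  have ai: "allinv (Tg k True M)" using Tg_allinv assms by auto
  have pT: "pp (Tg k True M) i j = (minv (Tg k True M i) * Tg k True M j) $$ (0, 0)"
    unfolding pp_def by simp
  have d: "pp (Tg k True M) j j = 1" for j using ai unfolding allinv_def by simp
  show ?thesis
  proof (cases "i = k")
    case True
    show ?thesis
    proof (cases "j = k")
      case True thus ?thesis using d \<open>i = k\<close> by simp
    next
      case False
      hence q: "pp (Tg k True M) i j = (minv (M (k + 1)) * Xi M k * (if j = k + 1 then M k else M j)) $$ (0, 0)"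
        using pT \<open>i = k\<close> mk by (simp add: T)
      show ?thesis
      proof (cases "j = k + 1")
        case True
        have "pp (Tg k True M) i j = (minv (M (k + 1)) * Xi M k * M k) $$ (0, 0)" using q True by simp
        also have "\<dots> = pp M (k + 1) k + (inverse mu - 1) * pp M (k + 1) k * pp M k k" by (rule e1)
        also have "\<dots> = inverse mu * pp M (k + 1) k" using inv by (simp add: algebra_simps)
        finally show ?thesis using True \<open>i = k\<close> by simp
      next
        case False
        thus ?thesis using q e1 \<open>j \<noteq> k\<close> \<open>i = k\<close> by simp
      qed
    qed
  next
    case ik: False
    show ?thesis
    proof (cases "i = k + 1")
      case True
      show ?thesis
      proof (cases "j = k")
        case True
        hence "pp (Tg k True M) i j = pp (Tg k True M) i j" by simp
        have "pp (Tg k True M) i j = (minv (M k) * (Xd M k * M (k + 1))) $$ (0, 0)"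
          using pT \<open>i = k + 1\<close> True by (simp add: T)
        thus ?thesis using e2[of k] True \<open>i = k + 1\<close> inv by (auto simp: algebra_simps)
      next
        case False
        thus ?thesis using pT \<open>i = k + 1\<close> d inv m_pos by (auto simp: T pp_def)
      qed
    next
      case False
      thus ?thesis using pT ik e2 d by (auto simp: T pp_def)
    qed
  qed
qed

lemma pp_Tg_False:
  assumes "allinv M"
  shows "pp (Tg k False M) i j =
    (if i = k then
       (if j = k then 1
        else if j = k + 1 then inverse mu * pp M (k + 1) k
        else pp M (k + 1) j)
     else if i = k + 1 then
       (if j = k then mu * pp M k (k + 1) else if j = k + 1 then 1
        else pp M k j + (mu - 1) * pp M k (k + 1) * pp M (k + 1) j)
     else
       (if j = k then pp M i (k + 1)
        else if j = k + 1 then pp M i k + (inverse mu - 1) * pp M i (k + 1) * pp M (k + 1) k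
        else pp M i j))"
proof -
  have inv: "\<And>i. invm (M i)" using assms unfolding allinv_def by auto
  note X = Xd_props[OF inv]
  have c: "\<And>i. M i \<in> carrier_mat m m" "\<And>i. minv (M i) \<in> carrier_mat m m"
    using inv invm_carrier by auto
  have mk: "minv (Xi M (k + 1) * M k) = minv (M k) * Xd M (k + 1)"
    using invm_mult X inv by auto
  have e1: "\<And>j. (minv (M k) * Xd M (k + 1) * M j) $$ (0, 0) =
       pp M k j + (mu - 1) * pp M k (k + 1) * pp M (k + 1) j"
    unfolding pp_def Xd_def using H1 inv by auto
  have e2: "\<And>i. (minv (M i) * (Xi M (k + 1) * M k)) $$ (0, 0) =
       pp M i k + (inverse mu - 1) * pp M i (k + 1) * pp M (k + 1) k"
    unfolding pp_def Xi_def using H1[OF inv inv inv, symmetric] c by (simp add: assoc_m)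
  have T: "Tg k False M = M(k := M (k + 1), k + 1 := Xi M (k + 1) * M k)" unfolding Tg_def by simp
  have ai: "allinv (Tg k False M)" using Tg_allinv assms by auto
  have pT: "pp (Tg k False M) i j = (minv (Tg k False M i) * Tg k False M j) $$ (0, 0)"
    unfolding pp_def by simp
  have d: "pp (Tg k False M) j j = 1" for j using ai unfolding allinv_def by simp
  show ?thesis
  proof (cases "i = k + 1")
    case True
    show ?thesis
    proof (cases "j = k + 1")
      case True thus ?thesis using d \<open>i = k + 1\<close> by simp
    next
      case False
      hence q: "pp (Tg k False M) i j = (minv (M k) * Xd M (k + 1) * (if j = k then M (k + 1) else M j)) $$ (0, 0)"
        using pT \<open>i = k + 1\<close> mk by (simp add: T)
      show ?thesis
      proof (cases "j = k")
        case True
        have "pp (Tg k False M) i j = (minv (M k) * Xd M (k + 1) * M (k + 1)) $$ (0, 0)" using q True by simp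
        also have "\<dots> = pp M k (k + 1) + (mu - 1) * pp M k (k + 1) * pp M (k + 1) (k + 1)" by (rule e1)
        also have "\<dots> = mu * pp M k (k + 1)" using inv by (simp add: algebra_simps)
        finally show ?thesis using True \<open>i = k + 1\<close> by simp
      next
        case False
        thus ?thesis using q e1 \<open>j \<noteq> k + 1\<close> \<open>i = k + 1\<close> by simp
      qed
    qed
  next
    case ik: False
    show ?thesis
    proof (cases "i = k")
      case True
      show ?thesis
      proof (cases "j = k + 1")
        case True
        have "pp (Tg k False M) i j = (minv (M (k + 1)) * (Xi M (k + 1) * M k)) $$ (0, 0)"
          using pT \<open>i = k\<close> True by (simp add: T)
        thus ?thesis using e2[of "k + 1"] True \<open>i = k\<close> inv by (auto simp: algebra_simps)
      next
        case False
        thus ?thesis using pT \<open>i = k\<close> d inv m_pos by (auto simp: T pp_def)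
      qed
    next
      case False
      thus ?thesis using pT ik e2 d by (auto simp: T pp_def)
    qed
  qed
qed

end

lemma teval_subst:
  "teval e l mu u (subst_a f t) =
   teval (\<lambda>g. case g of Ga i j \<Rightarrow> teval e l mu u (f i j) | _ \<Rightarrow> e g) l mu u t"
proof (induction t)
  case (Gen g) thus ?case by (cases g) auto
qed auto

lemma teval_cong:
  "all_gens P t \<Longrightarrow> (\<And>g. P g \<Longrightarrow> e g = e' g) \<Longrightarrow> teval e l mu u t = teval e' l mu u t"
  by (induction t) auto

lemma all_gens_mono: "all_gens P t \<Longrightarrow> (\<And>g. P g \<Longrightarrow> Q g) \<Longrightarrow> all_gens Q t"
  by (induction t) auto

definition distg :: "gen \<Rightarrow> bool" where
  "distg g = (case g of Ga i j \<Rightarrow> i \<noteq> j | _ \<Rightarrow> True)"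

lemma all_gens_subst:
  "all_gens P t \<Longrightarrow> (\<And>i j. P (Ga i j) \<Longrightarrow> all_gens Q (f i j)) \<Longrightarrow> (\<And>g. P g \<Longrightarrow> (\<forall>i j. g \<noteq> Ga i j) \<Longrightarrow> Q g)
   \<Longrightarrow> all_gens Q (subst_a f t)"
proof (induction t)
  case (Gen g) thus ?case by (cases g) auto
qed auto

lemma phi_gen_dist: "i \<noteq> j \<Longrightarrow> all_gens distg (phi_gen k s i j)"
  unfolding phi_gen_def a_def Sub_def Neg_def distg_def by auto

lemma subst_dist: "all_gens distg t \<Longrightarrow> all_gens distg (subst_a (phi_gen k s) t)"
  by (rule all_gens_subst, assumption) (auto simp: phi_gen_dist distg_def split: gen.splits)

lemma phi_braid_Cons: "phi_braid ((k, s) # B) t = subst_a (phi_gen k s) (phi_braid B t)"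
  unfolding phi_braid_def by simp

lemma phi_braid_Nil[simp]: "phi_braid [] t = t" unfolding phi_braid_def by simp

lemma phi_braid_dist: "all_gens distg t \<Longrightarrow> all_gens distg (phi_braid B t)"
  by (induction B) (auto simp: phi_braid_Cons subst_dist)

context dsetup
begin

definition alpha :: "nat \<Rightarrow> nat \<Rightarrow> complex" where
  "alpha i j = (if i < j then 1 - mu else 1 - inverse mu)"

fun env :: "(nat \<Rightarrow> complex mat) \<Rightarrow> gen \<Rightarrow> complex" where
  "env M (Ga i j) = alpha i j * pp M i j"
| "env M _ = 0"

lemma skein:
  assumes "allinv M" "i \<noteq> j"
  shows "teval (env M) l mu u (phi_gen k s i j) = env (Tg k s M) (Ga i j)"
proof -
  have inv: "\<And>i. invm (M i)" using assms unfolding allinv_def by auto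
  show ?thesis
  proof (cases s)
    case True
    thus ?thesis using assms(2) mu_nz inv
      unfolding phi_gen_def a_def Sub_def Neg_def
      by (auto simp: pp_Tg_True[OF assms(1)] alpha_def field_simps)
  next
    case False
    thus ?thesis using assms(2) mu_nz inv
      unfolding phi_gen_def a_def Sub_def Neg_def
      by (auto simp: pp_Tg_False[OF assms(1)] alpha_def field_simps)
  qed
qed

fun TB :: "braid \<Rightarrow> (nat \<Rightarrow> complex mat) \<Rightarrow> (nat \<Rightarrow> complex mat)" where
  "TB [] M = M"
| "TB ((k, s) # B) M = TB B (Tg k s M)"

lemma TB_allinv: "allinv M \<Longrightarrow> allinv (TB B M)"
  by (induction B arbitrary: M) (auto simp: Tg_allinv)

lemma lemmaA:
  assumes "allinv M" "all_gens distg t"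
  shows "teval (env M) l mu u (phi_braid B t) = teval (env (TB B M)) l mu u t"
  using assms(1)
proof (induction B arbitrary: M)
  case Nil thus ?case by simp
next
  case (Cons x B)
  obtain k s where x: "x = (k, s)" by (cases x)
  have "teval (env M) l mu u (phi_braid ((k, s) # B) t)
      = teval (env (Tg k s M)) l mu u (phi_braid B t)"
    unfolding phi_braid_Cons teval_subst
  proof (rule teval_cong[OF phi_braid_dist[OF assms(2)]])
    fix g assume "distg g"
    thus "(case g of Ga i j \<Rightarrow> teval (env M) l mu u (phi_gen k s i j) | _ \<Rightarrow> env M g) = env (Tg k s M) g"
      using skein[OF Cons(2)] by (cases g) (auto simp: distg_def)
  qed
  also have "\<dots> = teval (env (TB B (Tg k s M))) l mu u t"
    using Cons(1) Tg_allinv[OF Cons(2)] by auto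
  finally show ?case unfolding x by simp
qed

end

context dsetup
begin

lemma conj_Xd:
  assumes "invm P" "invm Q"
  shows "(P * Q) * Dg mu * minv (P * Q) = P * (Q * Dg mu * minv Q) * minv P"
proof -
  have c: "P \<in> carrier_mat m m" "Q \<in> carrier_mat m m" "minv P \<in> carrier_mat m m" "minv Q \<in> carrier_mat m m"
    using assms invm_carrier by auto
  show ?thesis using invm_mult(2)[OF assms] c by (simp add: assoc_m)
qed

lemma Xd_allinv: "allinv M \<Longrightarrow> \<forall>i. invm (Xd M i)"
  using Xd_props unfolding allinv_def by auto

lemma Xd_Tg: assumes "allinv M"
  shows "Xd (Tg k s M) i = eval_fword m (Xd M) (artin_gen k s i)"
proof -
  have inv: "\<And>i. invm (M i)" using assms unfolding allinv_def by auto
  have XI: "\<forall>i. invm (Xd M i)" using Xd_allinv[OF assms] .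
  note P = Xd_props[OF inv]
  have cX: "\<And>i. Xd M i \<in> carrier_mat m m" "\<And>i. Xi M i \<in> carrier_mat m m"
    using P invm_carrier by auto
  show ?thesis
  proof (cases s)
    case True
    have t: "Tg k s M k = Xd M k * M (k + 1)" using True by (simp add: Tg_def)
    have "Xd (Tg k s M) k = (Xd M k * M (k + 1)) * Dg mu * minv (Xd M k * M (k + 1))"
      unfolding Xd_def[of "Tg k s M"] t by simp
    also have "\<dots> = Xd M k * Xd M (k + 1) * minv (Xd M k)"
      using conj_Xd[of "Xd M k" "M (k + 1)"] P inv unfolding Xd_def[of M "k + 1"] by simp
    finally have "Xd (Tg k s M) k = Xd M k * Xd M (k + 1) * minv (Xd M k)" .
    moreover have "eval_fword m (Xd M) (artin_gen k s k) = Xd M k * Xd M (k + 1) * minv (Xd M k)"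
      using True XI cX P by (simp add: artin_gen_def ev_Cons lt_def assoc_m)
    moreover have "Xd (Tg k s M) (k + 1) = Xd M k" using True unfolding Tg_def Xd_def by simp
    moreover have "i \<noteq> k \<Longrightarrow> i \<noteq> k + 1 \<Longrightarrow> Xd (Tg k s M) i = Xd M i" using True unfolding Tg_def Xd_def by simp
    ultimately show ?thesis using True XI by (auto simp: artin_gen_def ev_single)
  next
    case False
    have t: "Tg k s M (k + 1) = Xi M (k + 1) * M k" using False by (simp add: Tg_def)
    have "Xd (Tg k s M) (k + 1) = (Xi M (k + 1) * M k) * Dg mu * minv (Xi M (k + 1) * M k)"
      unfolding Xd_def[of "Tg k s M"] t by simp
    also have "\<dots> = Xi M (k + 1) * Xd M k * minv (Xi M (k + 1))"
      using conj_Xd[of "Xi M (k + 1)" "M k"] P inv unfolding Xd_def[of M k] by simp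
    finally have "Xd (Tg k s M) (k + 1) = Xi M (k + 1) * Xd M k * minv (Xi M (k + 1))" .
    moreover have "eval_fword m (Xd M) (artin_gen k s (k + 1)) = Xi M (k + 1) * Xd M k * minv (Xi M (k + 1))"
      using False XI cX P by (simp add: artin_gen_def ev_Cons lt_def assoc_m)
    moreover have "Xd (Tg k s M) k = Xd M (k + 1)" using False unfolding Tg_def Xd_def by simp
    moreover have "i \<noteq> k \<Longrightarrow> i \<noteq> k + 1 \<Longrightarrow> Xd (Tg k s M) i = Xd M i" using False unfolding Tg_def Xd_def by simp
    ultimately show ?thesis using False XI by (auto simp: artin_gen_def ev_single)
  qed
qed

lemma ev_artin_word:
  assumes "\<forall>i. invm (X i)" "\<forall>i. invm (Y i)" "\<And>i. Y i = eval_fword m X (artin_gen k s i)"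
  shows "eval_fword m Y w = eval_fword m X (artin_word k s w)"
proof (induction w)
  case Nil thus ?case by simp
next
  case (Cons x w)
  obtain i e where x: "x = (i, e)" by (cases x)
  have "lt Y x = eval_fword m X (if e then artin_gen k s i else finv (artin_gen k s i))"
    unfolding x lt_def using assms by (simp add: ev_finv)
  have "eval_fword m Y (x # w) = lt Y x * eval_fword m Y w" using ev_Cons assms(2) by blast
  thus ?case using Cons assms(1) \<open>lt Y x = _\<close> unfolding x by (simp add: artin_word_Cons ev_append)
qed

lemma Tg_corr: assumes "allinv M"
  shows "Tg k s M p = eval_fword m (Xd M) (arc_corr k s p) * M (swap_strand k p)"
proof -
  have inv: "\<And>i. invm (M i)" using assms unfolding allinv_def by auto
  have XI: "\<forall>i. invm (Xd M i)" using Xd_allinv[OF assms] .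
  note P = Xd_props[OF inv]
  show ?thesis using inv XI P
    by (auto simp: Tg_def arc_corr_def swap_strand_def ev_single)
qed

lemma arcs_TB: assumes "allinv M"
  shows "TB B M j = eval_fword m (Xd M) (fst (arcs B j)) * M (braid_perm B j)"
  using assms
proof (induction B arbitrary: M)
  case Nil
  thus ?case unfolding allinv_def by simp
next
  case (Cons x B)
  obtain k s where x: "x = (k, s)" by (cases x)
  have a2: "allinv (Tg k s M)" using Tg_allinv Cons(2) by auto
  have XI: "\<forall>i. invm (Xd M i)" using Xd_allinv[OF Cons(2)] .
  have XI2: "\<forall>i. invm (Xd (Tg k s M) i)" using Xd_allinv[OF a2] .
  have "TB (x # B) M j = eval_fword m (Xd (Tg k s M)) (fst (arcs B j)) * Tg k s M (braid_perm B j)"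
    using Cons(1)[OF a2] unfolding x by simp
  also have "\<dots> = eval_fword m (Xd M) (artin_word k s (fst (arcs B j))) *
      (eval_fword m (Xd M) (arc_corr k s (snd (arcs B j))) * M (swap_strand k (braid_perm B j)))"
    using ev_artin_word[OF XI XI2 Xd_Tg[OF Cons(2)]] Tg_corr[OF Cons(2)] arcs_snd by simp
  also have "\<dots> = eval_fword m (Xd M) (fst (arcs (x # B) j)) * M (braid_perm (x # B) j)"
    unfolding x arcs_Cons braid_perm_Cons using ev_append[OF XI] ev_carrier[OF XI] Cons(2)
    unfolding allinv_def by (simp add: assoc_m invm_carrier)
  finally show ?case .
qed

lemma TB_upd:
  assumes "valid_braid n B" "q > n"
  shows "TB B (M(q := A)) = (TB B M)(q := A)" "TB B M q = M q"
proof -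
  have "\<forall>(k, s)\<in>set B. k < n" using assms(1) unfolding valid_braid_def by auto
  hence "TB B (M(q := A)) = (TB B M)(q := A) \<and> TB B M q = M q"
  proof (induction B arbitrary: M)
    case Nil thus ?case by simp
  next
    case (Cons x B)
    obtain k s where x: "x = (k, s)" by (cases x)
    have k: "k < n" using Cons(2) x by auto
    have e1: "Tg k s (M(q := A)) = (Tg k s M)(q := A)"
      using k assms(2) unfolding Tg_def Xd_def Xi_def by (auto simp: fun_upd_twist)
    have e2: "Tg k s M q = M q" using k assms(2) unfolding Tg_def by auto
    have IH: "TB B ((Tg k s M)(q := A)) = (TB B (Tg k s M))(q := A) \<and> TB B (Tg k s M) q = Tg k s M q"
    proof -
      have B: "\<forall>(k, s)\<in>set B. k < n" using Cons(2) by auto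
      show ?thesis using Cons(1)[where M = "Tg k s M", OF B] .
    qed
    have "TB (x # B) (M(q := A)) = TB B (Tg k s (M(q := A)))" by (simp add: x)
    also have "\<dots> = TB B ((Tg k s M)(q := A))" by (rule arg_cong[where f = "TB B"], fact e1)
    also have "\<dots> = (TB (x # B) M)(q := A)" using IH by (simp add: x)
    finally have f1: "TB (x # B) (M(q := A)) = (TB (x # B) M)(q := A)" .
    have f2: "TB (x # B) M q = M q" using IH e2 by (simp add: x)
    show ?case using f1 f2 by blast
  qed
  thus "TB B (M(q := A)) = (TB B M)(q := A)" "TB B M q = M q" by auto
qed

end

definition nost :: "nat \<Rightarrow> gen \<Rightarrow> bool" where
  "nost st g = (case g of Ga i j \<Rightarrow> i \<noteq> st \<and> j \<noteq> st | _ \<Rightarrow> True)"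

abbreviation sfree :: "nat \<Rightarrow> dterm \<Rightarrow> bool" where
  "sfree st t \<equiv> all_gens (nost st) t"

fun linL :: "nat \<Rightarrow> nat \<Rightarrow> dterm \<Rightarrow> bool" where
  "linL n st (Gen g) = (case g of Ga i j \<Rightarrow> j = st \<and> i \<in> {1..n} | _ \<Rightarrow> False)"
| "linL n st (Add s t) = (linL n st s \<and> linL n st t)"
| "linL n st (Mul s t) = ((linL n st s \<and> sfree st t) \<or> (sfree st s \<and> linL n st t))"
| "linL n st _ = False"

fun linR :: "nat \<Rightarrow> nat \<Rightarrow> dterm \<Rightarrow> bool" where
  "linR n st (Gen g) = (case g of Ga i j \<Rightarrow> i = st \<and> j \<in> {1..n} | _ \<Rightarrow> False)"
| "linR n st (Add s t) = (linR n st s \<and> linR n st t)"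
| "linR n st (Mul s t) = ((linR n st s \<and> sfree st t) \<or> (sfree st s \<and> linR n st t))"
| "linR n st _ = False"

lemma coeffL_sfree: "sfree st t \<Longrightarrow> teval e l mu u (coeffL st j t) = 0"
proof (induction t)
  case (Gen g) thus ?case by (cases g) (auto simp: nost_def)
qed auto

lemma coeffR_sfree: "sfree st t \<Longrightarrow> teval e l mu u (coeffR st j t) = 0"
proof (induction t)
  case (Gen g) thus ?case by (cases g) (auto simp: nost_def)
qed auto

lemma linL_sum: "linL n st t \<Longrightarrow>
  teval e l mu u t = (\<Sum>j\<in>{1..n}. teval e l mu u (coeffL st j t) * e (Ga j st))"
proof (induction t)
  case (Gen g)
  then obtain i where g: "g = Ga i st" "i \<in> {1..n}" by (cases g) auto
  have "(\<Sum>j\<in>{1..n}. (if i = j then 1 else 0) * e (Ga j st)) = e (Ga i st)"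
    using g(2) by (simp add: if_distrib[of "\<lambda>x. x * _"] cong: if_cong)
  moreover have "\<And>j. teval e l mu u (if i = j then Cst 1 else Cst 0) = (if i = j then 1 else 0)" by simp
  ultimately show ?case using g by simp
next
  case (Add s t) thus ?case by (simp add: sum.distrib algebra_simps)
next
  case (Mul s t)
  show ?case
  proof (cases "linL n st s \<and> sfree st t")
    case True
    thus ?thesis using Mul coeffL_sfree[of st t] by (simp add: sum_distrib_left sum_distrib_right algebra_simps)
  next
    case False
    hence "sfree st s \<and> linL n st t" using Mul(3) by auto
    thus ?thesis using Mul coeffL_sfree[of st s] by (simp add: sum_distrib_left algebra_simps)
  qed
qed auto

lemma linR_sum: "linR n st t \<Longrightarrow>
  teval e l mu u t = (\<Sum>j\<in>{1..n}. e (Ga st j) * teval e l mu u (coeffR st j t))"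
proof (induction t)
  case (Gen g)
  then obtain i where g: "g = Ga st i" "i \<in> {1..n}" by (cases g) auto
  have "(\<Sum>j\<in>{1..n}. e (Ga st j) * (if i = j then 1 else 0)) = e (Ga st i)"
    using g(2) by (simp add: if_distrib[of "\<lambda>x. _ * x"] cong: if_cong)
  moreover have "\<And>j. teval e l mu u (if i = j then Cst 1 else Cst 0) = (if i = j then 1 else 0)" by simp
  ultimately show ?case using g by simp
next
  case (Add s t) thus ?case by (simp add: sum.distrib algebra_simps)
next
  case (Mul s t)
  show ?case
  proof (cases "linR n st s \<and> sfree st t")
    case True
    thus ?thesis using Mul coeffR_sfree[of st t] by (simp add: sum_distrib_left sum_distrib_right algebra_simps)
  next
    case False
    hence "sfree st s \<and> linR n st t" using Mul(3) by auto
    thus ?thesis using Mul coeffR_sfree[of st s] by (simp add: sum_distrib_left algebra_simps)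
  qed
qed auto

lemma sfree_cong: "sfree st t \<Longrightarrow> (\<And>g. nost st g \<Longrightarrow> e g = e' g) \<Longrightarrow> teval e l mu u t = teval e' l mu u t"
  by (rule teval_cong)

lemma linL_cong: "linL n st t \<Longrightarrow> (\<And>g. nost st g \<Longrightarrow> e g = e' g) \<Longrightarrow>
   teval e l mu u (coeffL st j t) = teval e' l mu u (coeffL st j t)"
proof (induction t)
  case (Gen g) thus ?case by (cases g) auto
next
  case (Mul s t)
  show ?case
  proof (cases "linL n st s \<and> sfree st t")
    case True
    thus ?thesis using Mul coeffL_sfree[of st t] sfree_cong[of st t e e'] by simp
  next
    case False
    hence "sfree st s \<and> linL n st t" using Mul(3) by auto
    thus ?thesis using Mul coeffL_sfree[of st s] sfree_cong[of st s e e'] by simp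
  qed
qed auto

lemma linR_cong: "linR n st t \<Longrightarrow> (\<And>g. nost st g \<Longrightarrow> e g = e' g) \<Longrightarrow>
   teval e l mu u (coeffR st j t) = teval e' l mu u (coeffR st j t)"
proof (induction t)
  case (Gen g) thus ?case by (cases g) auto
next
  case (Mul s t)
  show ?case
  proof (cases "linR n st s \<and> sfree st t")
    case True
    thus ?thesis using Mul coeffR_sfree[of st t] sfree_cong[of st t e e'] by simp
  next
    case False
    hence "sfree st s \<and> linR n st t" using Mul(3) by auto
    thus ?thesis using Mul coeffR_sfree[of st s] sfree_cong[of st s e e'] by simp
  qed
qed auto

lemma sfree_subst:
  assumes "1 \<le> k" "k < n" "n < st"
  shows "sfree st t \<Longrightarrow> sfree st (subst_a (phi_gen k s) t)"
  by (rule all_gens_subst, assumption)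
     (use assms in \<open>auto simp: nost_def phi_gen_def a_def Sub_def Neg_def split: gen.splits\<close>)

lemma linL_subst:
  assumes "1 \<le> k" "k < n" "n < st"
  shows "linL n st t \<Longrightarrow> linL n st (subst_a (phi_gen k s) t)"
proof (induction t)
  case (Gen g)
  then obtain i where g: "g = Ga i st" "i \<in> {1..n}" by (cases g) auto
  show ?case using g assms unfolding phi_gen_def a_def Sub_def Neg_def by (auto simp: nost_def)
next
  case (Mul s t) thus ?case using sfree_subst[OF assms] by auto
qed auto

lemma linR_subst:
  assumes "1 \<le> k" "k < n" "n < st"
  shows "linR n st t \<Longrightarrow> linR n st (subst_a (phi_gen k s) t)"
proof (induction t)
  case (Gen g)
  then obtain i where g: "g = Ga st i" "i \<in> {1..n}" by (cases g) auto
  show ?case using g assms unfolding phi_gen_def a_def Sub_def Neg_def by (auto simp: nost_def)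
next
  case (Mul s t) thus ?case using sfree_subst[OF assms] by auto
qed auto

lemma lin_phi_braid:
  assumes "valid_braid n B"
  shows "i \<in> {1..n} \<Longrightarrow> linL n (n + 1) (phi_braid B (a i (n + 1)))"
    "i \<in> {1..n} \<Longrightarrow> linR n (n + 1) (phi_braid B (a (n + 1) i))"
proof -
  have "\<forall>(k, s)\<in>set B. 1 \<le> k \<and> k < n" using assms unfolding valid_braid_def by auto
  hence "\<forall>t. (linL n (n + 1) t \<longrightarrow> linL n (n + 1) (phi_braid B t)) \<and>
             (linR n (n + 1) t \<longrightarrow> linR n (n + 1) (phi_braid B t))"
  proof (induction B)
    case Nil thus ?case by simp
  next
    case (Cons x B)
    obtain k s where x: "x = (k, s)" by (cases x)
    have "1 \<le> k" "k < n" using Cons(2) x by auto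
    thus ?case using Cons linL_subst linR_subst unfolding x by (auto simp: phi_braid_Cons)
  qed
  thus "i \<in> {1..n} \<Longrightarrow> linL n (n + 1) (phi_braid B (a i (n + 1)))"
    "i \<in> {1..n} \<Longrightarrow> linR n (n + 1) (phi_braid B (a (n + 1) i))"
    by (auto simp: a_def)
qed

lemma finv_fst: "fst ` set (finv w) = fst ` set w"
  unfolding finv_def by (induction w) auto

lemma artin_gen_fst: "fst ` set (artin_gen k s i) \<subseteq> {i, k, Suc k}"
  unfolding artin_gen_def by (cases s) auto

lemma artin_word_idx:
  assumes "1 \<le> k" "k < n" "\<forall>x\<in>set w. fst x \<in> {1..n}"
  shows "\<forall>x\<in>set (artin_word k s w). fst x \<in> {1..n}"
  using assms(3)
proof (induction w)
  case Nil thus ?case by simp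
next
  case (Cons x w)
  have x1: "fst x \<in> {1..n}" using Cons.prems by simp
  have sub: "{fst x, k, Suc k} \<subseteq> {1..n}" using x1 assms(1,2) by auto
  have "fst ` set (if snd x then artin_gen k s (fst x) else finv (artin_gen k s (fst x))) \<subseteq> {1..n}"
    using artin_gen_fst[of k s "fst x"] finv_fst[of "artin_gen k s (fst x)"] sub by (cases "snd x") auto
  moreover have "\<forall>y\<in>set (artin_word k s w). fst y \<in> {1..n}"
    by (rule Cons.IH) (use Cons.prems in simp)
  ultimately show ?case unfolding artin_word_Cons set_append ball_Un by blast
qed

lemma arcs_idx:
  assumes "valid_braid n B" "j \<in> {1..n}"
  shows "(\<forall>x\<in>set (fst (arcs B j)). fst x \<in> {1..n}) \<and> snd (arcs B j) \<in> {1..n}"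
proof -
  have "\<forall>(k, s)\<in>set B. 1 \<le> k \<and> k < n" using assms(1) unfolding valid_braid_def by auto
  thus ?thesis
  proof (induction B)
    case Nil thus ?case using assms(2) by simp
  next
    case (Cons x B)
    obtain k s where x: "x = (k, s)" by (cases x)
    have k: "1 \<le> k" "k < n" using Cons.prems unfolding x by simp_all
    have IH: "(\<forall>x\<in>set (fst (arcs B j)). fst x \<in> {1..n}) \<and> snd (arcs B j) \<in> {1..n}"
      using Cons.IH Cons.prems by simp
    have "\<forall>x\<in>set (artin_word k s (fst (arcs B j))). fst x \<in> {1..n}"
      using artin_word_idx[OF k] IH by blast
    moreover have "\<forall>x\<in>set (arc_corr k s (snd (arcs B j))). fst x \<in> {1..n}"
      using k unfolding arc_corr_def by auto
    moreover have "swap_strand k (snd (arcs B j)) \<in> {1..n}"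
      using k IH unfolding swap_strand_def by auto
    ultimately show ?case unfolding x arcs_Cons fst_conv snd_conv set_append ball_Un by blast
  qed
qed

lemma swap_strand_inv[simp]: "swap_strand k (swap_strand k j) = j"
  unfolding swap_strand_def by auto

lemma braid_perm_inj: "inj (braid_perm B)"
proof (induction B)
  case Nil thus ?case by simp
next
  case (Cons x B)
  obtain k s where x: "x = (k, s)" by (cases x)
  have "inj (swap_strand k)" by (metis injI swap_strand_inv)
  thus ?case using Cons inj_compose unfolding x braid_perm_Cons by blast
qed

lemma perm_range: "valid_braid n B \<Longrightarrow> j \<in> {1..n} \<Longrightarrow> braid_perm B j \<in> {1..n}"
  using arcs_idx arcs_snd by metis

lemma idx_finv: "\<forall>x\<in>set w. fst x \<in> S \<Longrightarrow> \<forall>x\<in>set (finv w). fst x \<in> S"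
  unfolding finv_def by auto

locale kctx = dsetup +
  fixes n :: nat and B :: braid and X :: "nat \<Rightarrow> complex mat" and lam0 :: complex
  assumes vb: "valid_braid n B" and ck: "closure_is_knot n B"
    and kg: "knot_group_rep n B m X"
    and mer: "X 1 = Dg mu"
    and lon0: "eval_fword m X (longitude_word n B) $$ (0, 0) = lam0"
    and lon1: "\<forall>i < m. \<forall>j < m. i \<noteq> j \<longrightarrow> eval_fword m X (longitude_word n B) $$ (i, j) = 0"
begin

lemma n_pos: "1 \<le> n" using ck unfolding closure_is_knot_def by auto

definition Y :: "nat \<Rightarrow> complex mat" where
  "Y i = (if i \<in> {1..n} then X i else 1\<^sub>m m)"

lemma Y_inv: "\<forall>i. invm (Y i)"
  using kg invertible_invm invm_one unfolding Y_def knot_group_rep_def by auto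

lemma ev_XY: "\<forall>x\<in>set w. fst x \<in> {1..n} \<Longrightarrow> eval_fword m X w = eval_fword m Y w"
  by (rule ev_cong) (auto simp: Y_def)

abbreviation pi :: "nat \<Rightarrow> nat" where "pi \<equiv> braid_perm B"

definition G :: "nat \<Rightarrow> complex mat" where
  "G j = eval_fword m Y (fst (arcs B j))"

lemma G_inv: "invm (G j)" unfolding G_def using ev_invm Y_inv by auto

lemma rel: assumes "j \<in> {1..n}" shows "Y j = G j * Y (pi j) * minv (G j)"
proof -
  have idx: "\<forall>x\<in>set (fst (arcs B j)). fst x \<in> {1..n}" "pi j \<in> {1..n}"
    using arcs_idx[OF vb assms] arcs_snd by auto
  have idx2: "\<forall>x\<in>set (artin_braid B [(j, True)]). fst x \<in> {1..n}"
    unfolding artin_braid_gen using idx idx_finv[OF idx(1)] by auto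
  have "Y j = eval_fword m X (artin_braid B [(j, True)])"
    using kg assms unfolding knot_group_rep_def Y_def by auto
  also have "\<dots> = eval_fword m Y (artin_braid B [(j, True)])" using ev_XY idx2 by auto
  also have "\<dots> = G j * (Y (pi j) * minv (G j))"
    unfolding artin_braid_gen G_def using Y_inv by (simp add: ev_append ev_finv ev_Cons lt_def)
  also have "\<dots> = G j * Y (pi j) * minv (G j)"
    using G_inv Y_inv invm_carrier minv_carrier by (simp add: assoc_m)
  finally show ?thesis .
qed

definition jt :: "nat \<Rightarrow> nat" where "jt t = (pi ^^ t) 1"

lemma jt_0[simp]: "jt 0 = 1" unfolding jt_def by simp
lemma jt_Suc: "jt (Suc t) = pi (jt t)" unfolding jt_def by simp

lemma jt_range: "jt t \<in> {1..n}"
proof (induction t)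
  case 0 thus ?case using n_pos by simp
next
  case (Suc t) thus ?case using perm_range[OF vb Suc.IH] jt_Suc by simp
qed

lemma jt_img: "jt ` {0..<n} = {1..n}"
proof
  show "jt ` {0..<n} \<subseteq> {1..n}" using jt_range by auto
  show "{1..n} \<subseteq> jt ` {0..<n}"
  proof
    fix x assume "x \<in> {1..n}"
    then obtain i where i: "i < n" "(pi ^^ i) 1 = x" using ck unfolding closure_is_knot_def by blast
    hence "x = jt i" unfolding jt_def by simp
    thus "x \<in> jt ` {0..<n}" using i(1) by simp
  qed
qed

lemma jt_inj: "inj_on jt {0..<n}"
proof (rule eq_card_imp_inj_on)
  show "finite {0..<n}" by simp
  have "card (jt ` {0..<n}) = n" using jt_img by simp
  thus "card (jt ` {0..<n}) = card {0..<n}" by simp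
qed

lemma jt_inj': "s < n \<Longrightarrow> t < n \<Longrightarrow> jt s = jt t \<Longrightarrow> s = t"
  using jt_inj unfolding inj_on_def by simp

lemma jt_n: "jt n = 1"
proof -
  have "jt n \<in> jt ` {0..<n}" using jt_range[of n] jt_img by simp
  then obtain s where s: "s < n" "jt n = jt s" by auto
  show ?thesis
  proof (cases s)
    case 0 thus ?thesis using s by simp
  next
    case (Suc s')
    have nn: "n = Suc (n - 1)" using n_pos by simp
    have "pi (jt (n - 1)) = jt n" using jt_Suc[of "n - 1"] nn by simp
    also have "\<dots> = pi (jt s')" using s Suc jt_Suc by simp
    finally have "jt (n - 1) = jt s'" using braid_perm_inj unfolding inj_def by blast
    hence "n - 1 = s'" using jt_inj'[of "n - 1" s'] s Suc n_pos by simp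
    thus ?thesis using s Suc by simp
  qed
qed

definition Q :: "nat \<Rightarrow> complex mat" where
  "Q t = eval_fword m Y (concat (map (\<lambda>i. fst (arcs B (jt i))) [t..<n]))"

lemma Q_inv: "invm (Q t)" unfolding Q_def using ev_invm Y_inv by auto

lemma Q_n: "Q n = 1\<^sub>m m" unfolding Q_def by simp

lemma Q_step: "t < n \<Longrightarrow> Q t = G (jt t) * Q (Suc t)"
  unfolding Q_def G_def using Y_inv by (simp add: upt_conv_Cons ev_append)

lemma Q_rel: "t \<le> n \<Longrightarrow> Y (jt t) = Q t * Y 1 * minv (Q t)"
proof (induction "n - t" arbitrary: t)
  case 0
  hence "t = n" by simp
  thus ?case using jt_n Q_n Y_inv invm_carrier by (simp add: minv_one)
next
  case (Suc d)
  hence t: "t < n" by simp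
  have c: "G (jt t) \<in> carrier_mat m m" "Q (Suc t) \<in> carrier_mat m m" "Y 1 \<in> carrier_mat m m"
    "minv (Q (Suc t)) \<in> carrier_mat m m" "minv (G (jt t)) \<in> carrier_mat m m"
    using G_inv Q_inv Y_inv invm_carrier minv_carrier by auto
  have "Y (jt t) = G (jt t) * Y (jt (Suc t)) * minv (G (jt t))"
    using rel[OF jt_range] jt_Suc by simp
  also have "\<dots> = G (jt t) * (Q (Suc t) * Y 1 * minv (Q (Suc t))) * minv (G (jt t))"
    using Suc(1)[of "Suc t"] Suc(2) t by simp
  also have "\<dots> = (G (jt t) * Q (Suc t)) * Y 1 * (minv (Q (Suc t)) * minv (G (jt t)))"
    using c by (simp add: assoc_m)
  also have "\<dots> = Q t * Y 1 * minv (Q t)"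
    using Q_step[OF t] invm_mult(2)[OF G_inv Q_inv] by simp
  finally show ?case .
qed

definition tinv :: "nat \<Rightarrow> nat" where "tinv j = (THE t. t < n \<and> jt t = j)"

lemma tinv: "j \<in> {1..n} \<Longrightarrow> tinv j < n \<and> jt (tinv j) = j"
proof -
  assume "j \<in> {1..n}"
  then obtain t where t: "t < n" "jt t = j" using jt_img by (metis atLeastLessThan_iff imageE)
  have "tinv j = t" unfolding tinv_def using t jt_inj' by (intro the_equality) auto
  thus ?thesis using t by auto
qed

lemma tinv_jt: "t < n \<Longrightarrow> tinv (jt t) = t"
  using tinv[OF jt_range[of t]] jt_inj' by auto

definition M0 :: "nat \<Rightarrow> complex mat" where
  "M0 j = (if j \<in> {2..n} then Q (tinv j) else 1\<^sub>m m)"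

lemma M0_allinv: "allinv M0" unfolding allinv_def M0_def using Q_inv invm_one by auto

lemma M0_jt: "1 \<le> t \<Longrightarrow> t \<le> n \<Longrightarrow> M0 (jt t) = Q t"
proof (cases "t = n")
  case True thus ?thesis using jt_n Q_n unfolding M0_def by simp
next
  case False
  assume t: "1 \<le> t" "t \<le> n"
  hence tn: "t < n" using False by simp
  have "jt t \<noteq> 1" using jt_inj'[of t 0] tn t by auto
  hence "jt t \<in> {2..n}" using jt_range[of t] by auto
  thus ?thesis unfolding M0_def using tinv_jt[OF tn] by simp
qed

lemma Xd_M0: "j \<in> {1..n} \<Longrightarrow> Xd M0 j = Y j"
proof -
  assume j: "j \<in> {1..n}"
  show ?thesis
  proof (cases "j = 1")
    case True
    thus ?thesis unfolding Xd_def M0_def using mer Y_def n_pos by (simp add: minv_one)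
  next
    case False
    obtain t where t: "t < n" "jt t = j" using tinv[OF j] by blast
    have "t \<noteq> 0" using t False jt_0 by metis
    hence "M0 j = Q t" using M0_jt[of t] t by auto
    moreover have "Y 1 = Dg mu" using mer n_pos unfolding Y_def by simp
    ultimately show ?thesis unfolding Xd_def using Q_rel[of t] t by simp
  qed
qed

lemma TB_M0: "j \<in> {1..n} \<Longrightarrow> TB B M0 j = G j * M0 (pi j)"
proof -
  assume j: "j \<in> {1..n}"
  have "eval_fword m (Xd M0) (fst (arcs B j)) = eval_fword m Y (fst (arcs B j))"
    using arcs_idx[OF vb j] Xd_M0 by (intro ev_cong) auto
  thus ?thesis using arcs_TB[OF M0_allinv] unfolding G_def by simp
qed

lemma TB_M0_other: "j \<in> {2..n} \<Longrightarrow> TB B M0 j = M0 j"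
proof -
  assume j: "j \<in> {2..n}"
  obtain t where t: "t < n" "jt t = j" using tinv[of j] j by auto
  have "t \<noteq> 0"
  proof
    assume "t = 0" hence "j = 1" using t(2) by simp
    thus False using j by simp
  qed
  hence t1: "1 \<le> t" by simp
  have "TB B M0 j = G (jt t) * M0 (jt (Suc t))" using TB_M0[of j] j t jt_Suc by simp
  also have "\<dots> = G (jt t) * Q (Suc t)" using M0_jt[of "Suc t"] t by simp
  also have "\<dots> = Q t" using Q_step t by simp
  also have "\<dots> = M0 j" using M0_jt[of t] t t1 by simp
  finally show ?thesis .
qed

lemma TB_M0_one: "TB B M0 1 = Q 0"
proof -
  have "TB B M0 1 = G (jt 0) * M0 (jt 1)" using TB_M0[of 1] n_pos jt_Suc[of 0] by simp
  also have "\<dots> = G (jt 0) * Q 1" using M0_jt[of 1] n_pos by simp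
  also have "\<dots> = Q 0" using Q_step n_pos by simp
  finally show ?thesis .
qed

end

context msetup
begin

definition rc0 :: "complex \<Rightarrow> complex mat \<Rightarrow> bool" where
  "rc0 c A \<longleftrightarrow> A \<in> carrier_mat m m \<and> A $$ (0, 0) = c \<and>
     (\<forall>l<m. l \<noteq> 0 \<longrightarrow> A $$ (0, l) = 0 \<and> A $$ (l, 0) = 0)"

lemma rc0_left:
  assumes "rc0 p A" "C \<in> carrier_mat m m" "l < m"
  shows "(A * C) $$ (0, l) = p * C $$ (0, l)"
proof -
  have "(A * C) $$ (0, l) = (\<Sum>k<m. (if k = 0 then p else 0) * C $$ (k, l))"
    using assms m_pos unfolding rc0_def
    by (simp del: index_mult_mat add: mult_entry) (intro sum.cong, auto)
  also have "\<dots> = p * C $$ (0, l)" using m_pos by (simp add: if_distrib[of "\<lambda>x. x * _"] cong: if_cong)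
  finally show ?thesis .
qed

lemma rc0_right:
  assumes "rc0 p A" "C \<in> carrier_mat m m" "l < m"
  shows "(C * A) $$ (l, 0) = C $$ (l, 0) * p"
proof -
  have "(C * A) $$ (l, 0) = (\<Sum>k<m. C $$ (l, k) * (if k = 0 then p else 0))"
    using assms m_pos unfolding rc0_def
    by (simp del: index_mult_mat add: mult_entry) (intro sum.cong, auto)
  thus ?thesis using sum_single m_pos by simp
qed

lemma rc0_mult: "rc0 p A \<Longrightarrow> rc0 q C \<Longrightarrow> rc0 (p * q) (A * C)"
proof -
  assume A: "rc0 p A" and C: "rc0 q C"
  have c: "A \<in> carrier_mat m m" "C \<in> carrier_mat m m" using A C unfolding rc0_def by auto
  have a1: "A $$ (0, 0) = p" "\<And>l. l < m \<Longrightarrow> l \<noteq> 0 \<Longrightarrow> A $$ (l, 0) = 0" using A unfolding rc0_def by auto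
  have c1: "C $$ (0, 0) = q" "\<And>l. l < m \<Longrightarrow> l \<noteq> 0 \<Longrightarrow> C $$ (0, l) = 0" using C unfolding rc0_def by auto
  have "(A * C) $$ (0, 0) = p * q" using rc0_left[OF A c(2), of 0] c1 m_pos by simp
  moreover have "\<forall>l<m. l \<noteq> 0 \<longrightarrow> (A * C) $$ (0, l) = 0 \<and> (A * C) $$ (l, 0) = 0"
    using rc0_left[OF A c(2)] rc0_right[OF C c(1)] a1 c1 by simp
  ultimately show ?thesis unfolding rc0_def using c by simp
qed

lemma rc0_Dg: "rc0 d (Dg d)" unfolding rc0_def using m_pos by (auto simp: Dg_index)

lemma rc0_inv:
  assumes "rc0 p A" "invm A"
  shows "p \<noteq> 0" "rc0 (inverse p) (minv A)"
proof -
  have c: "A \<in> carrier_mat m m" "minv A \<in> carrier_mat m m" using assms invm_carrier by auto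
  have 1: "(minv A * A) $$ (l, 0) = (if l = 0 then 1 else 0)" if "l < m" for l
    using assms(2) that m_pos by simp
  have 2: "(A * minv A) $$ (0, l) = (if l = 0 then 1 else 0)" if "l < m" for l
    using assms(2) that m_pos by simp
  have e0: "minv A $$ (0, 0) * p = 1" using 1[of 0] rc0_right[OF assms(1) c(2), of 0] m_pos by simp
  thus "p \<noteq> 0" by auto
  have "minv A $$ (0, 0) = inverse p" using e0 \<open>p \<noteq> 0\<close> by (simp add: field_simps)
  moreover have "\<forall>l<m. l \<noteq> 0 \<longrightarrow> minv A $$ (0, l) = 0 \<and> minv A $$ (l, 0) = 0"
  proof (intro allI impI)
    fix l assume l: "l < m" "l \<noteq> 0"
    have "minv A $$ (l, 0) * p = 0" using 1[OF l(1)] rc0_right[OF assms(1) c(2) l(1)] l by simp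
    moreover have "p * minv A $$ (0, l) = 0" using 2[OF l(1)] rc0_left[OF assms(1) c(2) l(1)] l by simp
    ultimately show "minv A $$ (0, l) = 0 \<and> minv A $$ (l, 0) = 0" using \<open>p \<noteq> 0\<close> by simp
  qed
  ultimately show "rc0 (inverse p) (minv A)" unfolding rc0_def using c by auto
qed

end

context kctx
begin

lemma ev_rep: "eval_fword m Y (replicate k (1, b)) = Dg ((if b then mu else inverse mu) ^ k)"
proof (induction k)
  case 0 thus ?case by (simp add: Dg_one)
next
  case (Suc k)
  have "lt Y (1, b) = Dg (if b then mu else inverse mu)"
    unfolding lt_def Y_def using mer n_pos Dg_invm mu_nz by auto
  thus ?case using Suc Y_inv by (simp add: ev_Cons Dg_mult)
qed

definition eps :: complex where
  "eps = (if 0 \<le> writhe B then inverse mu ^ nat (writhe B) else mu ^ nat (- writhe B))"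

definition kap :: complex where "kap = lam0 * inverse eps"

lemma eps_nz: "eps \<noteq> 0" unfolding eps_def using mu_nz by auto

definition Lw :: "complex mat" where "Lw = eval_fword m X (longitude_word n B)"

lemma Lw_Q: "Lw = Q 0 * Dg eps"
proof -
  have i1: "\<forall>x\<in>set (blackboard_longitude n B). fst x \<in> {1..n}"
    unfolding blackboard_longitude_def using arcs_idx[OF vb jt_range] unfolding jt_def by auto
  have i2: "\<forall>x\<in>set (longitude_word n B). fst x \<in> {1..n}"
    unfolding longitude_word_def using i1 n_pos by auto
  have "Lw = eval_fword m Y (longitude_word n B)" unfolding Lw_def using ev_XY i2 by auto
  also have "\<dots> = eval_fword m Y (blackboard_longitude n B) *
      eval_fword m Y (if 0 \<le> writhe B then replicate (nat (writhe B)) (1, False)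
                      else replicate (nat (- writhe B)) (1, True))"
    unfolding longitude_word_def using ev_append[OF Y_inv] by blast
  also have "eval_fword m Y (blackboard_longitude n B) = Q 0"
    unfolding Q_def blackboard_longitude_def jt_def by simp
  also have "eval_fword m Y (if 0 \<le> writhe B then replicate (nat (writhe B)) (1, False)
                      else replicate (nat (- writhe B)) (1, True)) = Dg eps"
    unfolding eps_def using ev_rep[of _ False] ev_rep[of _ True] by (cases "0 \<le> writhe B") simp_all
  finally show ?thesis .
qed

lemma Lw_rc0: "rc0 lam0 Lw"
  unfolding rc0_def using lon0 lon1 ev_carrier[OF Y_inv] Lw_Q Q_inv invm_carrier m_pos
  unfolding Lw_def by auto

lemma Q0_rc0: "rc0 kap (Q 0)" "kap \<noteq> 0" "rc0 (inverse kap) (minv (Q 0))" "lam0 \<noteq> 0"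
proof -
  have "Q 0 = Lw * Dg (inverse eps)"
    using Lw_Q Q_inv invm_carrier Dg_mult eps_nz by (simp add: assoc_m Dg_one)
  thus r: "rc0 kap (Q 0)" unfolding kap_def using rc0_mult[OF Lw_rc0 rc0_Dg] by simp
  show "kap \<noteq> 0" using rc0_inv[OF r Q_inv] by auto
  show "rc0 (inverse kap) (minv (Q 0))" using rc0_inv[OF r Q_inv] by auto
  show "lam0 \<noteq> 0" using \<open>kap \<noteq> 0\<close> unfolding kap_def by auto
qed

definition cc :: "nat \<Rightarrow> complex" where "cc i = (if i = 1 then kap else 1)"

lemma TB_left: assumes "i \<in> {1..n}" "C \<in> carrier_mat m m"
  shows "(minv (TB B M0 i) * C) $$ (0, 0) = inverse (cc i) * (minv (M0 i) * C) $$ (0, 0)"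
proof (cases "i = 1")
  case True
  thus ?thesis using TB_M0_one rc0_left[OF Q0_rc0(3) assms(2)] m_pos assms(2)
    unfolding cc_def M0_def by (simp add: minv_one)
next
  case False
  thus ?thesis using TB_M0_other assms unfolding cc_def by auto
qed

lemma TB_right: assumes "j \<in> {1..n}" "C \<in> carrier_mat m m"
  shows "(C * TB B M0 j) $$ (0, 0) = (C * M0 j) $$ (0, 0) * cc j"
proof (cases "j = 1")
  case True
  thus ?thesis using TB_M0_one rc0_right[OF Q0_rc0(1) assms(2)] m_pos assms(2)
    unfolding cc_def M0_def by simp
next
  case False
  thus ?thesis using TB_M0_other assms unfolding cc_def by auto
qed

lemma cc_nz: "cc i \<noteq> 0" unfolding cc_def using Q0_rc0 by auto

lemma pp_TB: assumes "i \<in> {1..n}" "j \<in> {1..n}"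
  shows "pp (TB B M0) i j = inverse (cc i) * cc j * pp M0 i j"
proof -
  have a: "allinv (TB B M0)" using TB_allinv M0_allinv by auto
  have c: "\<And>i. TB B M0 i \<in> carrier_mat m m" "\<And>i. minv (M0 i) \<in> carrier_mat m m"
    using a M0_allinv invm_carrier minv_carrier unfolding allinv_def by auto
  have "pp (TB B M0) i j = inverse (cc i) * (minv (M0 i) * TB B M0 j) $$ (0, 0)"
    unfolding pp_def using TB_left[OF assms(1) c(1)] .
  also have "\<dots> = inverse (cc i) * ((minv (M0 i) * M0 j) $$ (0, 0) * cc j)"
    using TB_right[OF assms(2) c(2)] by simp
  finally show ?thesis unfolding pp_def by simp
qed

end

lemma teval_funpow_Mul: "teval e l mu u ((Mul x ^^ k) t) = teval e l mu u x ^ k * teval e l mu u t"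
  by (induction k) auto

lemma teval_tpow: "teval e l mu u (tpow x xi k) =
   (if 0 \<le> k then teval e l mu u x ^ nat k else teval e l mu u xi ^ nat (- k))"
  by (simp add: teval_funpow_Mul)

lemma teval_foldr_Add: "teval e l mu u (foldr Add (map f xs) (Cst 0)) = (\<Sum>k\<leftarrow>xs. teval e l mu u (f k))"
  by (induction xs) auto

lemma teval_mmul: "teval e l mu u (mmul n P R i j) =
   (\<Sum>k\<in>{1..n}. teval e l mu u (P i k) * teval e l mu u (R k j))"
proof -
  have "teval e l mu u (mmul n P R i j) = (\<Sum>k\<leftarrow>[1..<n + 1]. teval e l mu u (P i k) * teval e l mu u (R k j))"
    unfolding mmul_def teval_foldr_Add by simp
  also have "\<dots> = (\<Sum>k\<in>set [1..<n + 1]. teval e l mu u (P i k) * teval e l mu u (R k j))"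
    by (rule sum_list_distinct_conv_sum_set) simp
  also have "set [1..<n + 1] = {1..n}" by auto
  finally show ?thesis .
qed

lemma sum_single_n:
  fixes i n :: nat
  assumes "i \<in> {1..n}" "\<And>k. k \<in> {1..n} \<Longrightarrow> k \<noteq> i \<Longrightarrow> g k = 0"
  shows "(\<Sum>k\<in>{1..n}. g k) = (g i :: complex)"
proof -
  have "(\<Sum>k\<in>{1..n}. g k) = g i + (\<Sum>k\<in>{1..n} - {i}. g k)" by (rule sum.remove) (use assms in auto)
  moreover have "(\<Sum>k\<in>{1..n} - {i}. g k) = 0" by (rule sum.neutral) (use assms in auto)
  ultimately show ?thesis by simp
qed

lemma sum_diag_l: "(i::nat) \<in> {1..n} \<Longrightarrow> (\<Sum>k\<in>{1..n}. (if i = k then c else 0) * f k) = (c::complex) * f i"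
  by (subst sum_single_n[of i]) auto

lemma sum_diag_r: "(j::nat) \<in> {1..n} \<Longrightarrow> (\<Sum>k\<in>{1..n}. f k * (if k = j then c else 0)) = f j * (c::complex)"
  by (subst sum_single_n[of j]) auto

context dsetup
begin

lemma Amat_eval: "allinv M \<Longrightarrow> teval (env M) l mu u (Amat i j) = (1 - mu) * pp M i j"
  unfolding Amat_def a_def Neg_def Sub_def allinv_def using mu_nz
  by (auto simp: alpha_def field_simps)

lemma Ahat_eval: "allinv M \<Longrightarrow> teval (env M) l mu 1 (Ahat i j) = (1 - mu) * pp M i j"
  unfolding Ahat_def a_def Neg_def Sub_def allinv_def using mu_nz
  by (auto simp: alpha_def field_simps)

lemma Amat_dist: "i \<noteq> j \<Longrightarrow> all_gens distg (Amat i j)"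
  unfolding Amat_def a_def Neg_def Sub_def distg_def by auto

lemma env_cong_st: assumes "nost st g" shows "env (M(st := A)) g = env M g"
  using assms by (cases g) (auto simp: nost_def pp_def)

end

context kctx
begin

abbreviation ev :: "dterm \<Rightarrow> complex" where "ev t \<equiv> teval (env M0) lam0 mu 1 t"

lemma Lmat_eval: "teval e lam0 mu 1 (Lmat n B i j) = (if i = j then cc i else 0)"
  unfolding Lmat_def cc_def kap_def eps_def using mu_nz
  by (auto simp: teval_tpow power_inverse teval_funpow_Mul)

lemma Linv_eval: "teval e lam0 mu 1 (Linv n B i j) = (if i = j then inverse (cc i) else 0)"
  unfolding Linv_def cc_def kap_def eps_def using mu_nz
  by (auto simp: teval_tpow power_inverse teval_funpow_Mul)

lemma M0_pp_diag: "pp M0 i i = 1" using M0_allinv unfolding allinv_def by simp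

lemma eqB: assumes "i \<in> {1..n}" "j \<in> {1..n}" "i \<noteq> j"
  shows "ev (dB_rhs n B i j) = 0"
proof -
  have phi: "ev (phi_braid B (Amat k l)) = (1 - mu) * (inverse (cc k) * cc l * pp M0 k l)"
    if "k \<in> {1..n}" "l \<in> {1..n}" for k l
  proof (cases "k = l")
    case True
    hence "phi_braid B (Amat k l) = Amat k l"
      unfolding Amat_def Sub_def Neg_def phi_braid_def by (induction B) auto
    thus ?thesis using True Amat_eval[OF M0_allinv] M0_pp_diag cc_nz by simp
  next
    case False
    have "ev (phi_braid B (Amat k l)) = teval (env (TB B M0)) lam0 mu 1 (Amat k l)"
      using lemmaA[OF M0_allinv Amat_dist[OF False]] .
    also have "\<dots> = (1 - mu) * pp (TB B M0) k l" using Amat_eval TB_allinv M0_allinv by simp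
    finally show ?thesis using pp_TB that by simp
  qed
  have "ev (mmul n (mmul n (Lmat n B) (\<lambda>i j. phi_braid B (Amat i j))) (Linv n B) i j)
     = (\<Sum>l\<in>{1..n}. (\<Sum>k\<in>{1..n}. (if i = k then cc i else 0) * ev (phi_braid B (Amat k l)))
          * (if l = j then inverse (cc l) else 0))"
    by (simp add: teval_mmul Lmat_eval Linv_eval)
  also have "\<dots> = (\<Sum>l\<in>{1..n}. (cc i * ev (phi_braid B (Amat i l))) * (if l = j then inverse (cc l) else 0))"
    using assms(1) by (simp only: sum_diag_l)
  also have "\<dots> = cc i * ev (phi_braid B (Amat i j)) * inverse (cc j)"
    using assms(2) by (subst sum_single_n[of j]) auto
  also have "\<dots> = (1 - mu) * pp M0 i j" using phi[OF assms(1,2)] cc_nz by (simp add: field_simps)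
  finally show ?thesis unfolding dB_rhs_def mminus_def Sub_def Neg_def
    using Amat_eval[OF M0_allinv] by simp
qed

lemma M'_allinv: "allinv (M0(n + 1 := A))" if "invm A" for A
  using M0_allinv that unfolding allinv_def by auto

lemma keyC: assumes "i \<in> {1..n}" "j \<in> {1..n}"
  shows "(\<Sum>l\<in>{1..n}. ev (PhiL n B i l) * ev (Amat l j)) = inverse (cc i) * ev (Amat i j)"
proof -
  define st where "st = n + 1"
  define t where "t = phi_braid B (a i st)"
  define M' where "M' = M0(st := M0 j)"
  have inv0: "\<And>k. invm (M0 k)" using M0_allinv unfolding allinv_def by auto
  have aM: "allinv M'" unfolding M'_def st_def using M'_allinv inv0 by auto
  have hl: "linL n st t" unfolding t_def st_def using lin_phi_braid(1)[OF vb assms(1)] .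
  have S1: "teval (env M') lam0 mu 1 t = (\<Sum>l\<in>{1..n}. teval (env M') lam0 mu 1 (coeffL st l t) * env M' (Ga l st))"
    using linL_sum[OF hl] .
  have S2: "teval (env M') lam0 mu 1 (coeffL st l t) = ev (coeffL st l t)" for l
    using linL_cong[OF hl] env_cong_st unfolding M'_def by blast
  have S3: "env M' (Ga l st) = ev (Amat l j)" if "l \<in> {1..n}" for l
  proof -
    have "l < st" "l \<noteq> st" using that unfolding st_def by auto
    hence "env M' (Ga l st) = (1 - mu) * pp M0 l j" unfolding M'_def by (simp add: alpha_def pp_def)
    thus ?thesis using Amat_eval[OF M0_allinv] by simp
  qed
  have dist: "all_gens distg (a i st)" unfolding a_def distg_def st_def using assms by auto
  have TBM': "TB B M' = (TB B M0)(st := M0 j)" unfolding M'_def using TB_upd(1)[OF vb] st_def by simp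
  have "teval (env M') lam0 mu 1 t = teval (env (TB B M')) lam0 mu 1 (a i st)"
    unfolding t_def using lemmaA[OF aM dist] .
  also have "\<dots> = (1 - mu) * (minv (TB B M0 i) * M0 j) $$ (0, 0)"
    unfolding a_def using assms TBM' by (simp add: alpha_def pp_def st_def)
  also have "\<dots> = (1 - mu) * (inverse (cc i) * pp M0 i j)"
    using TB_left[OF assms(1)] inv0 invm_carrier unfolding pp_def by simp
  finally have "(\<Sum>l\<in>{1..n}. ev (coeffL st l t) * ev (Amat l j)) = (1 - mu) * (inverse (cc i) * pp M0 i j)"
    using S1 S2 S3 by simp
  thus ?thesis unfolding PhiL_def t_def st_def using Amat_eval[OF M0_allinv] by simp
qed

lemma keyD: assumes "i \<in> {1..n}" "j \<in> {1..n}"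
  shows "(\<Sum>k\<in>{1..n}. ev (Amat i k) * ev (PhiR n B k j)) = cc j * ev (Amat i j)"
proof -
  define st where "st = n + 1"
  define t where "t = phi_braid B (a st j)"
  define M' where "M' = M0(st := M0 i)"
  have inv0: "\<And>k. invm (M0 k)" using M0_allinv unfolding allinv_def by auto
  have aM: "allinv M'" unfolding M'_def st_def using M'_allinv inv0 by auto
  have hl: "linR n st t" unfolding t_def st_def using lin_phi_braid(2)[OF vb assms(2)] .
  have S1: "teval (env M') lam0 mu 1 t = (\<Sum>k\<in>{1..n}. env M' (Ga st k) * teval (env M') lam0 mu 1 (coeffR st k t))"
    using linR_sum[OF hl] .
  have S2: "teval (env M') lam0 mu 1 (coeffR st k t) = ev (coeffR st k t)" for k
    using linR_cong[OF hl] env_cong_st unfolding M'_def by blast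
  have S3: "env M' (Ga st k) = (1 - inverse mu) * pp M0 i k" if "k \<in> {1..n}" for k
  proof -
    have "\<not> st < k" "k \<noteq> st" using that unfolding st_def by auto
    thus ?thesis unfolding M'_def by (simp add: alpha_def pp_def)
  qed
  have dist: "all_gens distg (a st j)" unfolding a_def distg_def st_def using assms by auto
  have TBM': "TB B M' = (TB B M0)(st := M0 i)" unfolding M'_def using TB_upd(1)[OF vb] st_def by simp
  have "teval (env M') lam0 mu 1 t = teval (env (TB B M')) lam0 mu 1 (a st j)"
    unfolding t_def using lemmaA[OF aM dist] .
  also have "\<dots> = (1 - inverse mu) * (minv (M0 i) * TB B M0 j) $$ (0, 0)"
    unfolding a_def using assms TBM' by (simp add: alpha_def pp_def st_def)
  also have "\<dots> = (1 - inverse mu) * (pp M0 i j * cc j)"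
    using TB_right[OF assms(2)] inv0 minv_carrier unfolding pp_def by simp
  finally have T: "teval (env M') lam0 mu 1 t = (1 - inverse mu) * (pp M0 i j * cc j)" .
  have S4: "teval (env M') lam0 mu 1 t = (\<Sum>k\<in>{1..n}. ((1 - inverse mu) * pp M0 i k) * ev (coeffR st k t))"
    unfolding S1
  proof (rule sum.cong)
    fix k assume k: "k \<in> {1..n}"
    show "env M' (Ga st k) * teval (env M') lam0 mu 1 (coeffR st k t) = (1 - inverse mu) * pp M0 i k * ev (coeffR st k t)"
      using S2[of k] S3[OF k] by (simp del: env.simps)
  qed simp
  have key: "(1 - inverse mu) * (\<Sum>k\<in>{1..n}. pp M0 i k * ev (coeffR st k t)) = (1 - inverse mu) * (pp M0 i j * cc j)"
    using S4 T by (simp add: sum_distrib_left mult.assoc)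
  have m1: "1 - mu = - mu * (1 - inverse mu)" using mu_nz by (simp add: field_simps)
  have "(\<Sum>k\<in>{1..n}. ev (Amat i k) * ev (coeffR st k t)) = (1 - mu) * (\<Sum>k\<in>{1..n}. pp M0 i k * ev (coeffR st k t))"
    by (simp only: Amat_eval[OF M0_allinv] sum_distrib_left mult.assoc)
  also have "\<dots> = - mu * ((1 - inverse mu) * (\<Sum>k\<in>{1..n}. pp M0 i k * ev (coeffR st k t)))"
    using m1 by simp
  also have "\<dots> = (1 - mu) * (pp M0 i j * cc j)" using key m1 by simp
  finally show ?thesis unfolding PhiR_def t_def st_def using Amat_eval[OF M0_allinv] by simp
qed

lemma eqC: assumes "i \<in> {1..n}" "j \<in> {1..n}" shows "ev (dC_rhs n B i j) = 0"
proof -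
  have "ev (mmul n (mmul n (Lmat n B) (PhiL n B)) Amat i j)
     = (\<Sum>l\<in>{1..n}. (\<Sum>k\<in>{1..n}. (if i = k then cc i else 0) * ev (PhiL n B k l)) * ev (Amat l j))"
    by (simp add: teval_mmul Lmat_eval)
  also have "\<dots> = (\<Sum>l\<in>{1..n}. (cc i * ev (PhiL n B i l)) * ev (Amat l j))"
    using assms(1) by (simp only: sum_diag_l)
  also have "\<dots> = cc i * (\<Sum>l\<in>{1..n}. ev (PhiL n B i l) * ev (Amat l j))"
    by (simp add: sum_distrib_left algebra_simps)
  also have "\<dots> = ev (Amat i j)" using keyC[OF assms] cc_nz by simp
  finally show ?thesis unfolding dC_rhs_def mminus_def Sub_def Neg_def
    using Amat_eval[OF M0_allinv] Ahat_eval[OF M0_allinv] by simp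
qed

lemma eqD: assumes "i \<in> {1..n}" "j \<in> {1..n}" shows "ev (dD_rhs n B i j) = 0"
proof -
  have "ev (mmul n (mmul n Ahat (PhiR n B)) (Linv n B) i j)
     = (\<Sum>l\<in>{1..n}. (\<Sum>k\<in>{1..n}. ev (Ahat i k) * ev (PhiR n B k l)) * (if l = j then inverse (cc l) else 0))"
    by (simp add: teval_mmul Linv_eval)
  also have "\<dots> = (\<Sum>k\<in>{1..n}. ev (Ahat i k) * ev (PhiR n B k j)) * inverse (cc j)"
    using assms(2) by (subst sum_single_n[of j]) auto
  also have "\<dots> = (\<Sum>k\<in>{1..n}. ev (Amat i k) * ev (PhiR n B k j)) * inverse (cc j)"
    using Amat_eval[OF M0_allinv] Ahat_eval[OF M0_allinv] by simp
  also have "\<dots> = ev (Amat i j)" using keyD[OF assms] cc_nz by simp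
  finally show ?thesis unfolding dD_rhs_def mminus_def Sub_def Neg_def by simp
qed

lemma eqE: "ev (dE_rhs n B i j) = 0"
  unfolding dE_rhs_def mminus_def Sub_def Neg_def Bhat_def Cmat_def Dmat_def
  by (simp add: teval_mmul)

lemma eqF: "ev (dF_rhs n B i j) = 0"
  unfolding dF_rhs_def mminus_def Sub_def Neg_def Bmat_def Cmat_def Dmat_def
  by (simp add: teval_mmul)

lemma dgen_zero: "gen_in n g \<Longrightarrow> ev (dgen n B g) = 0"
proof (cases g)
  case (Gb i j)
  assume "gen_in n g"
  thus ?thesis using Gb eqB[of i j] by (simp add: Neg_def)
qed (auto simp: eqC eqD eqE eqF)

lemma dga_zero: "all_gens (gen_in n) t \<Longrightarrow> ev (dga_d n B t) = 0"
proof (induction t)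
  case (Gen g) thus ?case using dgen_zero by simp
qed auto

lemma aug: "is_augmentation n B (env M0) lam0 mu 1"
proof -
  have "\<forall>g. gen_in n g \<longrightarrow> gdeg g \<noteq> 0 \<longrightarrow> env M0 g = 0"
  proof (intro allI impI)
    fix g assume "gen_in n g" "gdeg g \<noteq> 0"
    thus "env M0 g = 0" by (cases g) auto
  qed
  thus ?thesis unfolding is_augmentation_def using Q0_rc0(4) mu_nz dga_zero by auto
qed

end

theorem theorem5p11:
  fixes n m0 :: nat and B :: braid and X :: "nat \<Rightarrow> complex mat"
    and mu0 lam0 :: complex
  assumes "valid_braid n B" and "closure_is_knot n B"
    and "m0 \<ge> 2"
    and "knot_group_rep n B m0 X"
    and "eval_fword m0 X meridian_word =
           mat m0 m0 (\<lambda>(i, j). if i = j then (if i = 0 then mu0 else 1) else 0)"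
    and "eval_fword m0 X (longitude_word n B) $$ (0, 0) = lam0"
    and "\<forall>i < m0. \<forall>j < m0. i \<noteq> j \<longrightarrow> eval_fword m0 X (longitude_word n B) $$ (i, j) = 0"
  shows "\<exists>e. is_augmentation n B e lam0 mu0 1"
proof -
  interpret ms: msetup m0 using assms(3) by unfold_locales simp
  have n1: "1 \<le> n" using assms(2) unfolding closure_is_knot_def by auto
  have X1: "X 1 \<in> carrier_mat m0 m0" "invertible_mat (X 1)"
    using assms(4) n1 unfolding knot_group_rep_def by auto
  have "eval_fword m0 X meridian_word = X 1"
    unfolding meridian_word_def eval_fword_def using X1 by simp
  hence mer: "X 1 = ms.Dg mu0" using assms(5) unfolding ms.Dg_def by simp
  have mu0: "mu0 \<noteq> 0"
  proof
    assume z: "mu0 = 0"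
    have "ms.invm (X 1)" using ms.invertible_invm X1 by auto
    hence "X 1 * ms.minv (X 1) = 1\<^sub>m m0" by (rule ms.invm_minv)
    hence "(ms.Dg mu0 * ms.minv (X 1)) $$ (0, 0) = 1" using mer assms(3) by simp
    moreover have "(ms.Dg mu0 * ms.minv (X 1)) $$ (0, 0) = 0"
      using ms.Dg_mult_index[OF ms.minv_carrier[OF \<open>ms.invm (X 1)\<close>], of 0 0 mu0] z assms(3) by simp
    ultimately show False by simp
  qed
  interpret k: kctx m0 mu0 n B X lam0
    using assms mer mu0 by unfold_locales auto
  show ?thesis using k.aug by blast
qed

end
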